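(* Let $(H,\beta)$ be a monoidal Hom-bialgebra and let $(A,\alpha)$ be a left $(H,\beta)$-Hom-comodule algebra with left Hom-coaction $\varphi:A\to H\otimes A$, $\varphi(a)=a_{(-1)}\otimes a_{(0)}$. Let $(\Gamma,\gamma)$ be a first order differential calculus over $(A,\alpha)$ with differential $d:A\to\Gamma$. Then the following are equivalent: (1) $(\Gamma,\gamma)$ is left-covariant with respect to $(H,\beta)$; (2) there is a morphism $\phi:(\Gamma,\gamma)\to(H\otimes\Gamma,\beta\otimes\gamma)$ in $\widetilde{\mathcal{H}}(\mathcal{M}_k)$ such that $\phi(a\cdot db)=\varphi(a)\,(\mathrm{id}\otimes d)(\varphi(b))$ for all $a,b\in A$; (3) for all finite families $a_i,b_i\in A$, $\sum_i a_i\cdot db_i=0$ in $\Gamma$ implies $\sum_i\varphi(a_i)\,(\mathrm{id}\otimes d)(\varphi(b_i))=0$ in $H\otimes\Gamma$.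
   Context: All vector spaces are over a field $k$. $\widetilde{\mathcal{H}}(\mathcal{M}_k)$ is the category whose objects are pairs $(M,\mu)$ with $M$ a $k$-vector space and $\mu$ a linear automorphism of $M$, and whose morphisms $f:(M,\mu)\to(N,\nu)$ are linear maps with $\nu\circ f=f\circ\mu$; tensor product $(M\otimes N,\mu\otimes\nu)$. A monoidal Hom-algebra $(A,\alpha)$ is an object with multiplication $a\otimes b\mapsto ab$ and unit $1_A$ such that $\alpha(ab)=\alpha(a)\alpha(b)$, $\alpha(1_A)=1_A$, $\alpha(a)(bc)=(ab)\alpha(c)$, $1_Aa=a1_A=\alpha(a)$. A monoidal Hom-coalgebra $(C,\beta)$ is an object with comultiplication $\Delta(c)=c_1\otimes c_2$ and counit $\varepsilon$ satisfying $\Delta\circ\beta=(\beta\otimes\beta)\circ\Delta$, $\varepsilon\circ\beta=\varepsilon$, $\beta^{-1}(c_1)\otimes c_{21}\otimes c_{22}=c_{11}\otimes c_{12}\otimes\beta^{-1}(c_2)$, $\varepsilon(c_1)c_2=c_1\varepsilon(c_2)=\beta^{-1}(c)$. A monoidal Hom-bialgebra is both, with $\Delta,\varepsilon$ multiplicative and unital. Left Hom-module $(M,\mu)$ over $(A,\alpha)$: a morphism $a\otimes m\mapsto a\cdot m$ with $\alpha(a)\cdot(b\cdot m)=(ab)\cdot\mu(m)$, $1_A\cdot m=\mu(m)$; right Hom-module: $(m\cdot a)\cdot\alpha(b)=\mu(m)\cdot(ab)$, $m\cdot 1_A=\mu(m)$; Hom-bimodule: both, with $\alpha(a)\cdot(m\cdot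 b)=(a\cdot m)\cdot\alpha(b)$. A left $(H,\beta)$-Hom-comodule $(M,\mu)$ is given by a morphism $\rho:M\to H\otimes M$, $\rho(m)=m_{(-1)}\otimes m_{(0)}$, with $\beta^{-1}(m_{(-1)})\otimes m_{(0)(-1)}\otimes m_{(0)(0)}=m_{(-1)1}\otimes m_{(-1)2}\otimes\mu^{-1}(m_{(0)})$ and $\varepsilon(m_{(-1)})m_{(0)}=\mu^{-1}(m)$. A left $(H,\beta)$-Hom-comodule algebra $(A,\alpha)$ is a monoidal Hom-algebra which is a left $(H,\beta)$-Hom-comodule via $\varphi$ with $\varphi(ab)=a_{(-1)}b_{(-1)}\otimes a_{(0)}b_{(0)}$ and $\varphi(1_A)=1_H\otimes 1_A$. A first order differential calculus (Hom-FODC) over $(A,\alpha)$ is an $(A,\alpha)$-Hom-bimodule $(\Gamma,\gamma)$ with a linear map $d:A\to\Gamma$ such that $d(ab)=a\cdot db+da\cdot b$, $d\circ\alpha=\gamma\circ d$, and $\Gamma$ is spanned by the elements $(a\cdot db)\cdot c$, $a,b,c\in A$. The space $H\otimes\Gamma$ carries the structures $(h\otimes a)(h'\otimes\omega)=hh'\otimes a\cdot\omega$ and $(h'\otimes\omega)(h\otimes a)=h'h\otimes\omega\cdot a$; thus $\varphi(a)(\mathrm{id}\otimes d)(\varphi(b))=a_{(-1)}b_{(-1)}\otimes a_{(0)}\cdot db_{(0)}$. The Hom-FODC $(\Gamma,\gamma)$ is left-covariant with respect to $(H,\beta)$ if there is a left Hom-coaction $\phi:\Gamma\to H\otimes\Gamma$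 of $(H,\beta)$ on $(\Gamma,\gamma)$ such that $\phi(\alpha(a)\cdot(\omega\cdot b))=\varphi(\alpha(a))(\phi(\omega)\varphi(b))$ for all $a,b\in A$, $\omega\in\Gamma$, and $\phi(da)=(\mathrm{id}\otimes d)\varphi(a)$ for all $a\in A$. *)

theory Defs
  imports Complex_Main "HOL-Library.Function_Algebras"
begin

definition hom_object :: "('k::field \<Rightarrow> 'm::ab_group_add \<Rightarrow> 'm) \<Rightarrow> ('m \<Rightarrow> 'm) \<Rightarrow> bool" where
  "hom_object s \<mu> \<longleftrightarrow> vector_space s \<and> Vector_Spaces.linear s s \<mu> \<and> bij \<mu>"

text \<open>An element of X \<otimes> Y is represented by a finite list of pairs (x_i, y_i), standing for
  the sum of the x_i \<otimes> y_i (scalars can be absorbed in the first factor).  The free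
  k-vector space on X \<times> Y is realised inside the functions X \<times> Y \<Rightarrow> k; two representatives are
  equal in X \<otimes> Y iff the difference of their formal sums lies in the span of the bilinearity
  relations.\<close>

definition fdelta :: "'p \<Rightarrow> 'p \<Rightarrow> 'k::field" where
  "fdelta p = (\<lambda>q. if q = p then 1 else 0)"

definition fsum :: "'p list \<Rightarrow> 'p \<Rightarrow> 'k::field" where
  "fsum xs = (\<lambda>p. of_nat (count_list xs p))"

definition fscale :: "'k::field \<Rightarrow> ('p \<Rightarrow> 'k) \<Rightarrow> ('p \<Rightarrow> 'k)" where
  "fscale c f = (\<lambda>p. c * f p)"

definition rel2 :: "('k::field \<Rightarrow> 'x::ab_group_add \<Rightarrow> 'x) \<Rightarrow> ('k \<Rightarrow> 'y::ab_group_add \<Rightarrow> 'y)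
    \<Rightarrow> ('x \<times> 'y \<Rightarrow> 'k) set" where
  "rel2 sx sy =
     {fdelta (x + x', y) - fdelta (x, y) - fdelta (x', y) | x x' y. True}
   \<union> {fdelta (x, y + y') - fdelta (x, y) - fdelta (x, y') | x y y'. True}
   \<union> {fdelta (sx c x, y) - fscale c (fdelta (x, y)) | c x y. True}
   \<union> {fdelta (x, sy c y) - fscale c (fdelta (x, y)) | c x y. True}"

definition rel3 :: "('k::field \<Rightarrow> 'x::ab_group_add \<Rightarrow> 'x) \<Rightarrow> ('k \<Rightarrow> 'y::ab_group_add \<Rightarrow> 'y)
    \<Rightarrow> ('k \<Rightarrow> 'z::ab_group_add \<Rightarrow> 'z) \<Rightarrow> ('x \<times> 'y \<times> 'z \<Rightarrow> 'k) set" where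
  "rel3 sx sy sz =
     {fdelta (x + x', y, z) - fdelta (x, y, z) - fdelta (x', y, z) | x x' y z. True}
   \<union> {fdelta (x, y + y', z) - fdelta (x, y, z) - fdelta (x, y', z) | x y y' z. True}
   \<union> {fdelta (x, y, z + z') - fdelta (x, y, z) - fdelta (x, y, z') | x y z z'. True}
   \<union> {fdelta (sx c x, y, z) - fscale c (fdelta (x, y, z)) | c x y z. True}
   \<union> {fdelta (x, sy c y, z) - fscale c (fdelta (x, y, z)) | c x y z. True}
   \<union> {fdelta (x, y, sz c z) - fscale c (fdelta (x, y, z)) | c x y z. True}"

definition teq2 :: "('k::field \<Rightarrow> 'x::ab_group_add \<Rightarrow> 'x) \<Rightarrow> ('k \<Rightarrow> 'y::ab_group_add \<Rightarrow> 'y)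
    \<Rightarrow> ('x \<times> 'y) list \<Rightarrow> ('x \<times> 'y) list \<Rightarrow> bool" where
  "teq2 sx sy xs ys \<longleftrightarrow> fsum xs - fsum ys \<in> module.span fscale (rel2 sx sy)"

definition teq3 :: "('k::field \<Rightarrow> 'x::ab_group_add \<Rightarrow> 'x) \<Rightarrow> ('k \<Rightarrow> 'y::ab_group_add \<Rightarrow> 'y)
    \<Rightarrow> ('k \<Rightarrow> 'z::ab_group_add \<Rightarrow> 'z)
    \<Rightarrow> ('x \<times> 'y \<times> 'z) list \<Rightarrow> ('x \<times> 'y \<times> 'z) list \<Rightarrow> bool" where
  "teq3 sx sy sz xs ys \<longleftrightarrow> fsum xs - fsum ys \<in> module.span fscale (rel3 sx sy sz)"

definition tscale :: "('k::field \<Rightarrow> 'x::ab_group_add \<Rightarrow> 'x) \<Rightarrow> 'k \<Rightarrow> ('x \<times> 'y) list \<Rightarrow> ('x \<times> 'y) list" where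
  "tscale sx c xs = map (\<lambda>(x, y). (sx c x, y)) xs"

text \<open>A morphism (M,\<mu>) \<rightarrow> (X \<otimes> Y, \<xi> \<otimes> \<eta>) in H~(M_k), given on representatives:
  linear (modulo the tensor relations) and commuting with the structure maps.\<close>
definition tmorphism :: "('k::field \<Rightarrow> 'm::ab_group_add \<Rightarrow> 'm) \<Rightarrow> ('m \<Rightarrow> 'm)
    \<Rightarrow> ('k \<Rightarrow> 'x::ab_group_add \<Rightarrow> 'x) \<Rightarrow> ('x \<Rightarrow> 'x)
    \<Rightarrow> ('k \<Rightarrow> 'y::ab_group_add \<Rightarrow> 'y) \<Rightarrow> ('y \<Rightarrow> 'y)
    \<Rightarrow> ('m \<Rightarrow> ('x \<times> 'y) list) \<Rightarrow> bool" where
  "tmorphism sm \<mu> sx \<xi> sy \<eta> f \<longleftrightarrow>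
     (\<forall>m n. teq2 sx sy (f (m + n)) (f m @ f n)) \<and>
     (\<forall>c m. teq2 sx sy (f (sm c m)) (tscale sx c (f m))) \<and>
     (\<forall>m. teq2 sx sy (f (\<mu> m)) (map (\<lambda>(x, y). (\<xi> x, \<eta> y)) (f m)))"

definition bilinear_map :: "('k::field \<Rightarrow> 'x::ab_group_add \<Rightarrow> 'x) \<Rightarrow> ('k \<Rightarrow> 'y::ab_group_add \<Rightarrow> 'y)
    \<Rightarrow> ('k \<Rightarrow> 'z::ab_group_add \<Rightarrow> 'z) \<Rightarrow> ('x \<Rightarrow> 'y \<Rightarrow> 'z) \<Rightarrow> bool" where
  "bilinear_map sx sy sz f \<longleftrightarrow>
     (\<forall>y. Vector_Spaces.linear sx sz (\<lambda>x. f x y)) \<and> (\<forall>x. Vector_Spaces.linear sy sz (f x))"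

definition hom_algebra :: "('k::field \<Rightarrow> 'a::ab_group_add \<Rightarrow> 'a) \<Rightarrow> ('a \<Rightarrow> 'a)
    \<Rightarrow> ('a \<Rightarrow> 'a \<Rightarrow> 'a) \<Rightarrow> 'a \<Rightarrow> bool" where
  "hom_algebra s \<alpha> mul one \<longleftrightarrow>
     hom_object s \<alpha> \<and> bilinear_map s s s mul \<and>
     (\<forall>a b. \<alpha> (mul a b) = mul (\<alpha> a) (\<alpha> b)) \<and> \<alpha> one = one \<and>
     (\<forall>a b c. mul (\<alpha> a) (mul b c) = mul (mul a b) (\<alpha> c)) \<and>
     (\<forall>a. mul one a = \<alpha> a \<and> mul a one = \<alpha> a)"

definition hom_coalgebra :: "('k::field \<Rightarrow> 'c::ab_group_add \<Rightarrow> 'c) \<Rightarrow> ('c \<Rightarrow> 'c)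
    \<Rightarrow> ('c \<Rightarrow> ('c \<times> 'c) list) \<Rightarrow> ('c \<Rightarrow> 'k) \<Rightarrow> bool" where
  "hom_coalgebra s \<beta> \<Delta> \<epsilon> \<longleftrightarrow>
     hom_object s \<beta> \<and> tmorphism s \<beta> s \<beta> s \<beta> \<Delta> \<and>
     Vector_Spaces.linear s (*) \<epsilon> \<and> (\<forall>c. \<epsilon> (\<beta> c) = \<epsilon> c) \<and>
     (\<forall>c. teq3 s s s
        (concat (map (\<lambda>(x, y). map (\<lambda>(u, v). (inv \<beta> x, u, v)) (\<Delta> y)) (\<Delta> c)))
        (concat (map (\<lambda>(x, y). map (\<lambda>(u, v). (u, v, inv \<beta> y)) (\<Delta> x)) (\<Delta> c)))) \<and>
     (\<forall>c. sum_list (map (\<lambda>(x, y). s (\<epsilon> x) y) (\<Delta> c)) = inv \<beta> c) \<and>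
     (\<forall>c. sum_list (map (\<lambda>(x, y). s (\<epsilon> y) x) (\<Delta> c)) = inv \<beta> c)"

definition hom_bialgebra :: "('k::field \<Rightarrow> 'h::ab_group_add \<Rightarrow> 'h) \<Rightarrow> ('h \<Rightarrow> 'h)
    \<Rightarrow> ('h \<Rightarrow> 'h \<Rightarrow> 'h) \<Rightarrow> 'h \<Rightarrow> ('h \<Rightarrow> ('h \<times> 'h) list) \<Rightarrow> ('h \<Rightarrow> 'k) \<Rightarrow> bool" where
  "hom_bialgebra s \<beta> mul one \<Delta> \<epsilon> \<longleftrightarrow>
     hom_algebra s \<beta> mul one \<and> hom_coalgebra s \<beta> \<Delta> \<epsilon> \<and>
     (\<forall>a b. teq2 s s (\<Delta> (mul a b))
        (concat (map (\<lambda>(x, y). map (\<lambda>(x', y'). (mul x x', mul y y')) (\<Delta> b)) (\<Delta> a)))) \<and>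
     teq2 s s (\<Delta> one) [(one, one)] \<and>
     (\<forall>a b. \<epsilon> (mul a b) = \<epsilon> a * \<epsilon> b) \<and> \<epsilon> one = 1"

definition hom_comodule :: "('k::field \<Rightarrow> 'h::ab_group_add \<Rightarrow> 'h) \<Rightarrow> ('h \<Rightarrow> 'h)
    \<Rightarrow> ('h \<Rightarrow> ('h \<times> 'h) list) \<Rightarrow> ('h \<Rightarrow> 'k)
    \<Rightarrow> ('k \<Rightarrow> 'm::ab_group_add \<Rightarrow> 'm) \<Rightarrow> ('m \<Rightarrow> 'm) \<Rightarrow> ('m \<Rightarrow> ('h \<times> 'm) list) \<Rightarrow> bool" where
  "hom_comodule sH \<beta> \<Delta> \<epsilon> sM \<mu> \<rho> \<longleftrightarrow>
     hom_object sM \<mu> \<and> tmorphism sM \<mu> sH \<beta> sM \<mu> \<rho> \<and>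
     (\<forall>m. teq3 sH sH sM
        (concat (map (\<lambda>(h, n). map (\<lambda>(u, v). (inv \<beta> h, u, v)) (\<rho> n)) (\<rho> m)))
        (concat (map (\<lambda>(h, n). map (\<lambda>(u, v). (u, v, inv \<mu> n)) (\<Delta> h)) (\<rho> m)))) \<and>
     (\<forall>m. sum_list (map (\<lambda>(h, n). sM (\<epsilon> h) n) (\<rho> m)) = inv \<mu> m)"

definition hom_comodule_algebra :: "('k::field \<Rightarrow> 'h::ab_group_add \<Rightarrow> 'h) \<Rightarrow> ('h \<Rightarrow> 'h)
    \<Rightarrow> ('h \<Rightarrow> 'h \<Rightarrow> 'h) \<Rightarrow> 'h \<Rightarrow> ('h \<Rightarrow> ('h \<times> 'h) list) \<Rightarrow> ('h \<Rightarrow> 'k)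
    \<Rightarrow> ('k \<Rightarrow> 'a::ab_group_add \<Rightarrow> 'a) \<Rightarrow> ('a \<Rightarrow> 'a) \<Rightarrow> ('a \<Rightarrow> 'a \<Rightarrow> 'a) \<Rightarrow> 'a
    \<Rightarrow> ('a \<Rightarrow> ('h \<times> 'a) list) \<Rightarrow> bool" where
  "hom_comodule_algebra sH \<beta> mulH oneH \<Delta> \<epsilon> sA \<alpha> mulA oneA \<phi> \<longleftrightarrow>
     hom_algebra sA \<alpha> mulA oneA \<and> hom_comodule sH \<beta> \<Delta> \<epsilon> sA \<alpha> \<phi> \<and>
     (\<forall>a b. teq2 sH sA (\<phi> (mulA a b))
        (concat (map (\<lambda>(h, x). map (\<lambda>(h', y). (mulH h h', mulA x y)) (\<phi> b)) (\<phi> a)))) \<and>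
     teq2 sH sA (\<phi> oneA) [(oneH, oneA)]"

definition hom_bimodule :: "('k::field \<Rightarrow> 'a::ab_group_add \<Rightarrow> 'a) \<Rightarrow> ('a \<Rightarrow> 'a)
    \<Rightarrow> ('a \<Rightarrow> 'a \<Rightarrow> 'a) \<Rightarrow> 'a
    \<Rightarrow> ('k \<Rightarrow> 'g::ab_group_add \<Rightarrow> 'g) \<Rightarrow> ('g \<Rightarrow> 'g)
    \<Rightarrow> ('a \<Rightarrow> 'g \<Rightarrow> 'g) \<Rightarrow> ('g \<Rightarrow> 'a \<Rightarrow> 'g) \<Rightarrow> bool" where
  "hom_bimodule sA \<alpha> mul one sG \<gamma> lact ract \<longleftrightarrow>
     hom_object sG \<gamma> \<and>
     bilinear_map sA sG sG lact \<and> (\<forall>a m. \<gamma> (lact a m) = lact (\<alpha> a) (\<gamma> m)) \<and>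
     bilinear_map sG sA sG ract \<and> (\<forall>m a. \<gamma> (ract m a) = ract (\<gamma> m) (\<alpha> a)) \<and>
     (\<forall>a b m. lact (\<alpha> a) (lact b m) = lact (mul a b) (\<gamma> m)) \<and> (\<forall>m. lact one m = \<gamma> m) \<and>
     (\<forall>a b m. ract (ract m a) (\<alpha> b) = ract (\<gamma> m) (mul a b)) \<and> (\<forall>m. ract m one = \<gamma> m) \<and>
     (\<forall>a b m. lact (\<alpha> a) (ract m b) = ract (lact a m) (\<alpha> b))"

definition hom_FODC :: "('k::field \<Rightarrow> 'a::ab_group_add \<Rightarrow> 'a) \<Rightarrow> ('a \<Rightarrow> 'a)
    \<Rightarrow> ('a \<Rightarrow> 'a \<Rightarrow> 'a) \<Rightarrow> 'a
    \<Rightarrow> ('k \<Rightarrow> 'g::ab_group_add \<Rightarrow> 'g) \<Rightarrow> ('g \<Rightarrow> 'g)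
    \<Rightarrow> ('a \<Rightarrow> 'g \<Rightarrow> 'g) \<Rightarrow> ('g \<Rightarrow> 'a \<Rightarrow> 'g) \<Rightarrow> ('a \<Rightarrow> 'g) \<Rightarrow> bool" where
  "hom_FODC sA \<alpha> mul one sG \<gamma> lact ract d \<longleftrightarrow>
     hom_bimodule sA \<alpha> mul one sG \<gamma> lact ract \<and>
     Vector_Spaces.linear sA sG d \<and>
     (\<forall>a b. d (mul a b) = lact a (d b) + ract (d a) b) \<and>
     (\<forall>a. d (\<alpha> a) = \<gamma> (d a)) \<and>
     module.span sG {ract (lact a (d b)) c | a b c. True} = UNIV"

definition tlmult :: "('h \<Rightarrow> 'h \<Rightarrow> 'h) \<Rightarrow> ('a \<Rightarrow> 'g \<Rightarrow> 'g)
    \<Rightarrow> ('h \<times> 'a) list \<Rightarrow> ('h \<times> 'g) list \<Rightarrow> ('h \<times> 'g) list" where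
  "tlmult mulH lact xs ys =
     concat (map (\<lambda>(h, a). map (\<lambda>(h', w). (mulH h h', lact a w)) ys) xs)"

definition trmult :: "('h \<Rightarrow> 'h \<Rightarrow> 'h) \<Rightarrow> ('g \<Rightarrow> 'a \<Rightarrow> 'g)
    \<Rightarrow> ('h \<times> 'g) list \<Rightarrow> ('h \<times> 'a) list \<Rightarrow> ('h \<times> 'g) list" where
  "trmult mulH ract ys xs =
     concat (map (\<lambda>(h', w). map (\<lambda>(h, a). (mulH h' h, ract w a)) xs) ys)"

definition tid_d :: "('a \<Rightarrow> 'g) \<Rightarrow> ('h \<times> 'a) list \<Rightarrow> ('h \<times> 'g) list" where
  "tid_d d xs = map (\<lambda>(h, a). (h, d a)) xs"

definition left_covariant :: "('k::field \<Rightarrow> 'h::ab_group_add \<Rightarrow> 'h) \<Rightarrow> ('h \<Rightarrow> 'h)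
    \<Rightarrow> ('h \<Rightarrow> 'h \<Rightarrow> 'h) \<Rightarrow> ('h \<Rightarrow> ('h \<times> 'h) list) \<Rightarrow> ('h \<Rightarrow> 'k)
    \<Rightarrow> ('a \<Rightarrow> 'a) \<Rightarrow> ('a \<Rightarrow> ('h \<times> 'a) list)
    \<Rightarrow> ('k \<Rightarrow> 'g::ab_group_add \<Rightarrow> 'g) \<Rightarrow> ('g \<Rightarrow> 'g)
    \<Rightarrow> ('a \<Rightarrow> 'g \<Rightarrow> 'g) \<Rightarrow> ('g \<Rightarrow> 'a \<Rightarrow> 'g) \<Rightarrow> ('a \<Rightarrow> 'g) \<Rightarrow> bool" where
  "left_covariant sH \<beta> mulH \<Delta> \<epsilon> \<alpha> \<phi>A sG \<gamma> lact ract d \<longleftrightarrow>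
     (\<exists>\<phi>. hom_comodule sH \<beta> \<Delta> \<epsilon> sG \<gamma> \<phi> \<and>
        (\<forall>a b \<omega>. teq2 sH sG (\<phi> (lact (\<alpha> a) (ract \<omega> b)))
            (tlmult mulH lact (\<phi>A (\<alpha> a)) (trmult mulH ract (\<phi> \<omega>) (\<phi>A b)))) \<and>
        (\<forall>a. teq2 sH sG (\<phi> (d a)) (tid_d d (\<phi>A a))))"

end

theory Submission
  imports Defs
begin

definition supp :: "('p \<Rightarrow> 'k::field) \<Rightarrow> 'p set" where "supp f = {p. f p \<noteq> 0}"
definition Lf :: "('p \<Rightarrow> 'k::field) \<Rightarrow> ('p \<Rightarrow> 'k) \<Rightarrow> 'k" where
  "Lf B f = (\<Sum>p\<in>supp f. f p * B p)"

lemma vs_fscale: "vector_space (fscale :: 'k::field \<Rightarrow> ('p \<Rightarrow> 'k) \<Rightarrow> _)"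
  by unfold_locales (auto simp: fscale_def fun_eq_iff algebra_simps)

lemma Lf_eq: "finite F \<Longrightarrow> supp f \<subseteq> F \<Longrightarrow> Lf B f = (\<Sum>p\<in>F. f p * B p)"
  unfolding Lf_def by (rule sum.mono_neutral_left) (auto simp: supp_def)

lemma supp_add: "supp (f + g) \<subseteq> supp f \<union> supp g" by (auto simp: supp_def)
lemma supp_diff: "supp (f - g) \<subseteq> supp f \<union> supp g" by (auto simp: supp_def)
lemma supp_scale: "supp (fscale c f) \<subseteq> supp f" by (auto simp: supp_def fscale_def)
lemma supp_delta: "supp (fdelta p :: _ \<Rightarrow> 'k::field) \<subseteq> {p}" by (auto simp: supp_def fdelta_def)
lemma supp_zero: "supp 0 = {}" by (auto simp: supp_def)
lemma supp_zero': "supp (\<lambda>_. 0) = {}" by (auto simp: supp_def)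
lemma sum_fun_apply: "(\<Sum>p\<in>A. f p) q = (\<Sum>p\<in>A. f p q)"
  by (induct A rule: infinite_finite_induct) auto

lemma fin_supp_add: "finite (supp f) \<Longrightarrow> finite (supp g) \<Longrightarrow> finite (supp (f + g))"
  by (meson finite_UnI finite_subset supp_add)
lemma fin_supp_diff: "finite (supp f) \<Longrightarrow> finite (supp g) \<Longrightarrow> finite (supp (f - g))"
  by (meson finite_UnI finite_subset supp_diff)
lemma fin_supp_scale: "finite (supp f) \<Longrightarrow> finite (supp (fscale c f))"
  by (meson finite_subset supp_scale)
lemma fin_supp_delta: "finite (supp (fdelta p :: _ \<Rightarrow> 'k::field))"
  by (meson finite.emptyI finite_insert finite_subset supp_delta)

lemma Lf_add: "finite (supp f) \<Longrightarrow> finite (supp g) \<Longrightarrow> Lf B (f + g) = Lf B f + Lf B g"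
proof -
  assume f: "finite (supp f)" and g: "finite (supp g)"
  let ?F = "supp f \<union> supp g"
  have "Lf B (f + g) = (\<Sum>p\<in>?F. (f+g) p * B p)" using f g supp_add[of f g] by (intro Lf_eq) auto
  also have "\<dots> = (\<Sum>p\<in>?F. f p * B p) + (\<Sum>p\<in>?F. g p * B p)"
    by (simp add: distrib_right sum.distrib)
  also have "\<dots> = Lf B f + Lf B g" using f g Lf_eq[of ?F f B] Lf_eq[of ?F g B] by auto
  finally show ?thesis .
qed

lemma Lf_diff: "finite (supp f) \<Longrightarrow> finite (supp g) \<Longrightarrow> Lf B (f - g) = Lf B f - Lf B g"
proof -
  assume f: "finite (supp f)" and g: "finite (supp g)"
  let ?F = "supp f \<union> supp g"
  have "Lf B (f - g) = (\<Sum>p\<in>?F. (f-g) p * B p)" using f g supp_diff[of f g] by (intro Lf_eq) auto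
  also have "\<dots> = (\<Sum>p\<in>?F. f p * B p) - (\<Sum>p\<in>?F. g p * B p)"
    by (simp add: left_diff_distrib sum_subtractf)
  also have "\<dots> = Lf B f - Lf B g" using f g Lf_eq[of ?F f B] Lf_eq[of ?F g B] by auto
  finally show ?thesis .
qed

lemma Lf_scale: "finite (supp f) \<Longrightarrow> Lf B (fscale c f) = c * Lf B f"
proof -
  assume f: "finite (supp f)"
  have "Lf B (fscale c f) = (\<Sum>p\<in>supp f. fscale c f p * B p)" using f supp_scale[of c f] by (intro Lf_eq) auto
  also have "\<dots> = c * Lf B f" by (simp add: Lf_def fscale_def sum_distrib_left mult.assoc)
  finally show ?thesis .
qed

lemma Lf_delta: "Lf B (fdelta p) = B p"
  by (subst Lf_eq[of "{p}"]) (auto simp: supp_def fdelta_def)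

lemma Lf_zero: "Lf B 0 = 0" by (simp add: Lf_def supp_zero)
lemma Lf_zero': "Lf B (\<lambda>_. 0) = 0" by (simp add: Lf_def supp_zero')

lemma fsum_Cons: "fsum (x # xs) = fdelta x + (fsum xs :: _ \<Rightarrow> 'k::field)"
  by (auto simp: fsum_def fdelta_def fun_eq_iff)

lemma fsum_Nil: "fsum [] = (0 :: _ \<Rightarrow> 'k::field)" by (auto simp: fsum_def fun_eq_iff)

lemma fin_supp_fsum: "finite (supp (fsum xs :: _ \<Rightarrow> 'k::field))"
proof (induct xs)
  case (Cons x xs) then show ?case unfolding fsum_Cons by (intro fin_supp_add fin_supp_delta)
qed (simp add: fsum_Nil supp_zero supp_zero')

lemma Lf_fsum: "Lf B (fsum xs) = sum_list (map B xs)"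
proof (induct xs)
  case (Cons x xs)
  have "Lf B (fsum (x#xs)) = Lf B (fdelta x) + Lf B (fsum xs)"
    unfolding fsum_Cons by (rule Lf_add[OF fin_supp_delta fin_supp_fsum])
  then show ?case by (simp add: Lf_delta Cons.hyps)
qed (simp add: fsum_Nil Lf_zero Lf_zero')

lemma span_Lf_zero:
  fixes R :: "('p \<Rightarrow> 'k::field) set"
  assumes R: "\<forall>r\<in>R. finite (supp r)" and B: "\<forall>r\<in>R. Lf B r = 0"
    and v: "v \<in> module.span fscale R"
  shows "finite (supp v) \<and> Lf B v = (0::'k::field)"
proof -
  interpret v: vector_space "fscale :: 'k \<Rightarrow> ('p \<Rightarrow> 'k) \<Rightarrow> _" by (rule vs_fscale)
  from v show ?thesis
  proof (induct rule: v.span_induct_alt)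
    case base then show ?case by (simp add: supp_zero Lf_zero supp_zero' Lf_zero')
  next
    case (step c x y)
    have fx: "finite (supp x)" using R step(1) by blast
    have "finite (supp (fscale c x + y))"
      using fin_supp_add[OF fin_supp_scale[OF fx]] step(2) by blast
    moreover have "Lf B (fscale c x + y) = c * Lf B x + Lf B y"
      using Lf_add[OF fin_supp_scale[OF fx]] step(2) Lf_scale[OF fx] by metis
    moreover have "Lf B x = 0" using B step(1) by blast
    ultimately show ?case using step(2) by (intro conjI) (simp_all only: mult_zero_right add_0)

  qed
qed

lemma fin_decomp:
  assumes "finite (supp f)"
  shows "f = (\<Sum>p\<in>supp f. fscale (f p) (fdelta p :: _ \<Rightarrow> 'k::field))"
proof
  fix q
  have "(\<Sum>p\<in>supp f. fscale (f p) (fdelta p)) q = (\<Sum>p\<in>supp f. f p * fdelta p q)"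
    by (simp add: fscale_def sum_fun_apply)
  also have "\<dots> = (\<Sum>p\<in>supp f. if p = q then f p else 0)"
    by (rule sum.cong) (auto simp: fdelta_def)
  also have "\<dots> = (if q \<in> supp f then f q else 0)" using assms by (rule sum.delta)
  also have "\<dots> = f q" by (auto simp: supp_def)
  finally show "f q = (\<Sum>p\<in>supp f. fscale (f p) (fdelta p)) q" by simp
qed

lemma Lf_zero_span:
  fixes R :: "('p \<Rightarrow> 'k::field) set"
  assumes R: "\<forall>r\<in>R. finite (supp r)" and vf: "finite (supp v)"
    and H: "\<And>B. \<forall>r\<in>R. Lf B r = 0 \<Longrightarrow> Lf B v = (0::'k::field)"
  shows "v \<in> module.span fscale R"
proof (rule ccontr)
  assume nv: "v \<notin> module.span fscale R"
  interpret v: vector_space "fscale :: 'k \<Rightarrow> ('p \<Rightarrow> 'k) \<Rightarrow> _" by (rule vs_fscale)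
  interpret vp: vector_space_pair "fscale :: 'k \<Rightarrow> ('p \<Rightarrow> 'k) \<Rightarrow> _" "(*) :: 'k \<Rightarrow> 'k \<Rightarrow> 'k"
    by unfold_locales (auto simp: algebra_simps)
  obtain Bs where Bs: "Bs \<subseteq> v.span R" "v.independent Bs" "v.span R \<subseteq> v.span Bs"
    "card Bs = v.dim (v.span R)"
    by (rule v.basis_exists)
  have sB: "v.span Bs = v.span R"
  proof (rule subset_antisym)
    show "v.span Bs \<subseteq> v.span R" using v.span_mono[OF Bs(1)] unfolding v.span_span .
  qed (rule Bs(3))
  have ind: "v.independent (insert v Bs)"
  proof (rule v.independent_insertI)
    show "v \<notin> v.span Bs" using nv unfolding sB .
  qed (rule Bs(2))
  obtain g where g: "Vector_Spaces.linear fscale (*) g"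
    "\<forall>x\<in>insert v Bs. g x = (if x = v then 1 else 0)"
    using vp.linear_independent_extend[OF ind, of "\<lambda>x. if x = v then 1 else 0"] by blast
  have vB: "v \<notin> Bs" using nv Bs(1) by auto
  have g0: "\<forall>x\<in>v.span Bs. g x = 0"
  proof
    fix x assume "x \<in> v.span Bs"
    moreover have "\<forall>b\<in>Bs. g b = 0" using g(2) vB by auto
    ultimately show "g x = 0" using vp.linear_eq_0_on_span[OF g(1)] by blast
  qed
  have gL: "g f = Lf (\<lambda>p. g (fdelta p)) f" if "finite (supp f)" for f
  proof -
    have "g f = g (\<Sum>p\<in>supp f. fscale (f p) (fdelta p))" by (rule arg_cong[OF fin_decomp[OF that]])
    also have "\<dots> = (\<Sum>p\<in>supp f. f p * g (fdelta p))"
      unfolding vp.linear_sum[OF g(1)] vp.linear_scale[OF g(1)] ..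
    finally show ?thesis by (simp add: Lf_def)
  qed
  have "\<forall>r\<in>R. Lf (\<lambda>p. g (fdelta p)) r = 0"
  proof
    fix r assume r: "r \<in> R"
    then have "r \<in> v.span Bs" using sB v.span_superset by blast
    then have "g r = 0" using g0 by blast
    then show "Lf (\<lambda>p. g (fdelta p)) r = 0" using gL R r by simp
  qed
  then have "Lf (\<lambda>p. g (fdelta p)) v = 0" by (rule H)
  moreover have "g v = 1" using g(2) by simp
  ultimately show False using gL[OF vf] by simp
qed

lemma teq_gen:
  fixes R :: "('p \<Rightarrow> 'k::field) set"
  assumes R: "\<forall>r\<in>R. finite (supp r)"
  shows "(fsum xs - fsum ys \<in> module.span fscale R) \<longleftrightarrow>
    (\<forall>B. (\<forall>r\<in>R. Lf B r = 0) \<longrightarrow> sum_list (map B xs) = (sum_list (map B ys) :: 'k::field))"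
proof
  assume "fsum xs - fsum ys \<in> module.span fscale R"
  then show "\<forall>B. (\<forall>r\<in>R. Lf B r = 0) \<longrightarrow> sum_list (map B xs) = sum_list (map B ys)"
  proof (intro allI impI)
    fix B :: "_ \<Rightarrow> 'k" assume "\<forall>r\<in>R. Lf B r = 0"
    then have "Lf B (fsum xs - fsum ys) = 0" using span_Lf_zero[OF R] \<open>fsum xs - fsum ys \<in> _\<close> by blast
    then show "sum_list (map B xs) = sum_list (map B ys)" by (simp add: Lf_diff fin_supp_fsum Lf_fsum)
  qed
next
  assume H: "\<forall>B. (\<forall>r\<in>R. Lf B r = 0) \<longrightarrow> sum_list (map B xs) = (sum_list (map B ys) :: 'k)"
  show "fsum xs - fsum ys \<in> module.span fscale R"
    by (rule Lf_zero_span[OF R]) (auto simp: fin_supp_diff fin_supp_fsum Lf_diff Lf_fsum H)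
qed

definition lin :: "('k::field \<Rightarrow> 'x::ab_group_add \<Rightarrow> 'x) \<Rightarrow> ('x \<Rightarrow> 'k) \<Rightarrow> bool" where
  "lin s f \<longleftrightarrow> (\<forall>x y. f (x + y) = f x + f y) \<and> (\<forall>c x. f (s c x) = c * f x)"

definition bil :: "('k::field \<Rightarrow> 'x::ab_group_add \<Rightarrow> 'x) \<Rightarrow> ('k \<Rightarrow> 'y::ab_group_add \<Rightarrow> 'y)
   \<Rightarrow> ('x \<Rightarrow> 'y \<Rightarrow> 'k) \<Rightarrow> bool" where
  "bil sx sy B \<longleftrightarrow> (\<forall>y. lin sx (\<lambda>x. B x y)) \<and> (\<forall>x. lin sy (B x))"

definition tri :: "('k::field \<Rightarrow> 'x::ab_group_add \<Rightarrow> 'x) \<Rightarrow> ('k \<Rightarrow> 'y::ab_group_add \<Rightarrow> 'y)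
   \<Rightarrow> ('k \<Rightarrow> 'z::ab_group_add \<Rightarrow> 'z) \<Rightarrow> ('x \<Rightarrow> 'y \<Rightarrow> 'z \<Rightarrow> 'k) \<Rightarrow> bool" where
  "tri sx sy sz T \<longleftrightarrow> (\<forall>y z. lin sx (\<lambda>x. T x y z)) \<and> (\<forall>x z. lin sy (\<lambda>y. T x y z))
     \<and> (\<forall>x y. lin sz (T x y))"

definition S2 :: "('x \<Rightarrow> 'y \<Rightarrow> 'k::comm_monoid_add) \<Rightarrow> ('x \<times> 'y) list \<Rightarrow> 'k" where
  "S2 B xs = sum_list (map (\<lambda>(x, y). B x y) xs)"

definition S3 :: "('x \<Rightarrow> 'y \<Rightarrow> 'z \<Rightarrow> 'k::comm_monoid_add) \<Rightarrow> ('x \<times> 'y \<times> 'z) list \<Rightarrow> 'k" where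
  "S3 T xs = sum_list (map (\<lambda>(x, y, z). T x y z) xs)"

lemma Lf_d3: "Lf B (fdelta a - fdelta b - fdelta c) = B a - B b - (B c :: 'k::field)"
  by (simp add: Lf_diff fin_supp_diff fin_supp_delta Lf_delta)

lemma Lf_d2s: "Lf B (fdelta a - fscale c (fdelta b)) = B a - c * (B b :: 'k::field)"
  by (simp add: Lf_diff fin_supp_scale fin_supp_delta Lf_delta Lf_scale)

lemma fin_d3: "finite (supp (fdelta a - fdelta b - fdelta c :: _ \<Rightarrow> 'k::field))"
  by (intro fin_supp_diff fin_supp_delta)

lemma fin_d2s: "finite (supp (fdelta a - fscale c (fdelta b) :: _ \<Rightarrow> 'k::field))"
  by (intro fin_supp_diff fin_supp_delta fin_supp_scale)

lemma rel2_fin: "\<forall>r\<in>rel2 sx sy. finite (supp r)"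
  unfolding rel2_def by (auto intro: fin_d3 fin_d2s)

lemma rel3_fin: "\<forall>r\<in>rel3 sx sy sz. finite (supp r)"
  unfolding rel3_def by (auto intro: fin_d3 fin_d2s)

lemma rel2_mem:
  "fdelta (x + x', y) - fdelta (x, y) - fdelta (x', y) \<in> rel2 sx sy"
  "fdelta (x, y + y') - fdelta (x, y) - fdelta (x, y') \<in> rel2 sx sy"
  "fdelta (sx c x, y) - fscale c (fdelta (x, y)) \<in> rel2 sx sy"
  "fdelta (x, sy c y) - fscale c (fdelta (x, y)) \<in> rel2 sx sy"
  unfolding rel2_def by blast+

lemma rel3_mem:
  "fdelta (x + x', y, z) - fdelta (x, y, z) - fdelta (x', y, z) \<in> rel3 sx sy sz"
  "fdelta (x, y + y', z) - fdelta (x, y, z) - fdelta (x, y', z) \<in> rel3 sx sy sz"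
  "fdelta (x, y, z + z') - fdelta (x, y, z) - fdelta (x, y, z') \<in> rel3 sx sy sz"
  "fdelta (sx c x, y, z) - fscale c (fdelta (x, y, z)) \<in> rel3 sx sy sz"
  "fdelta (x, sy c y, z) - fscale c (fdelta (x, y, z)) \<in> rel3 sx sy sz"
  "fdelta (x, y, sz c z) - fscale c (fdelta (x, y, z)) \<in> rel3 sx sy sz"
  unfolding rel3_def
  apply (rule UnI1, rule UnI1, rule UnI1, rule UnI1, rule UnI1, blast)
  apply (rule UnI1, rule UnI1, rule UnI1, rule UnI1, rule UnI2, blast)
  apply (rule UnI1, rule UnI1, rule UnI1, rule UnI2, blast)
  apply (rule UnI1, rule UnI1, rule UnI2, blast)
  apply (rule UnI1, rule UnI2, blast)
  apply (rule UnI2, blast)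
  done

lemma rel2_Lf: "(\<forall>r\<in>rel2 sx sy. Lf B r = 0) \<longleftrightarrow> bil sx sy (\<lambda>x y. B (x, y))"
proof
  assume H: "\<forall>r\<in>rel2 sx sy. Lf B r = 0"
  have h1: "B (x + x', y) = B (x, y) + B (x', y)" for x x' y
    using H[rule_format, OF rel2_mem(1)[of x x' y sx sy], unfolded Lf_d3] by (simp add: diff_diff_eq)
  have h2: "B (x, y + y') = B (x, y) + B (x, y')" for x y y'
    using H[rule_format, OF rel2_mem(2)[of x y y' sx sy], unfolded Lf_d3] by (simp add: diff_diff_eq)
  have h3: "B (sx c x, y) = c * B (x, y)" for c x y
    using H[rule_format, OF rel2_mem(3)[of sx c x y sy], unfolded Lf_d2s] by (simp add: diff_diff_eq)
  have h4: "B (x, sy c y) = c * B (x, y)" for c x y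
    using H[rule_format, OF rel2_mem(4)[of x sy c y sx], unfolded Lf_d2s] by (simp add: diff_diff_eq)
  show "bil sx sy (\<lambda>x y. B (x, y))"
    using h1 h2 h3 h4 unfolding bil_def lin_def by simp
next
  assume "bil sx sy (\<lambda>x y. B (x, y))"
  then show "\<forall>r\<in>rel2 sx sy. Lf B r = 0"
    unfolding rel2_def bil_def lin_def by (auto simp: Lf_d3 Lf_d2s)
qed

lemma rel3_Lf: "(\<forall>r\<in>rel3 sx sy sz. Lf B r = 0) \<longleftrightarrow> tri sx sy sz (\<lambda>x y z. B (x, y, z))"
proof
  assume H: "\<forall>r\<in>rel3 sx sy sz. Lf B r = 0"
  have h1: "B (x + x', y, z) = B (x, y, z) + B (x', y, z)" for x x' y z
    using H[rule_format, OF rel3_mem(1)[of x x' y z sx sy sz], unfolded Lf_d3] by (simp add: diff_diff_eq)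
  have h2: "B (x, y + y', z) = B (x, y, z) + B (x, y', z)" for x y y' z
    using H[rule_format, OF rel3_mem(2)[of x y y' z sx sy sz], unfolded Lf_d3] by (simp add: diff_diff_eq)
  have h3: "B (x, y, z + z') = B (x, y, z) + B (x, y, z')" for x y z z'
    using H[rule_format, OF rel3_mem(3)[of x y z z' sx sy sz], unfolded Lf_d3] by (simp add: diff_diff_eq)
  have h4: "B (sx c x, y, z) = c * B (x, y, z)" for c x y z
    using H[rule_format, OF rel3_mem(4)[of sx c x y z sy sz], unfolded Lf_d2s] by (simp add: diff_diff_eq)
  have h5: "B (x, sy c y, z) = c * B (x, y, z)" for c x y z
    using H[rule_format, OF rel3_mem(5)[of x sy c y z sx sz], unfolded Lf_d2s] by (simp add: diff_diff_eq)
  have h6: "B (x, y, sz c z) = c * B (x, y, z)" for c x y z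
    using H[rule_format, OF rel3_mem(6)[of x y sz c z sx sy], unfolded Lf_d2s] by (simp add: diff_diff_eq)
  show "tri sx sy sz (\<lambda>x y z. B (x, y, z))"
    using h1 h2 h3 h4 h5 h6 unfolding tri_def lin_def by simp
next
  assume "tri sx sy sz (\<lambda>x y z. B (x, y, z))"
  then show "\<forall>r\<in>rel3 sx sy sz. Lf B r = 0"
    unfolding rel3_def tri_def lin_def by (auto simp: Lf_d3 Lf_d2s)
qed

lemma teq2_iff: "teq2 sx sy xs ys \<longleftrightarrow> (\<forall>B. bil sx sy B \<longrightarrow> S2 B xs = S2 B ys)"
proof -
  have "teq2 sx sy xs ys \<longleftrightarrow> (\<forall>B. bil sx sy (\<lambda>x y. B (x, y)) \<longrightarrow> sum_list (map B xs) = sum_list (map B ys))"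
    unfolding teq2_def teq_gen[OF rel2_fin] rel2_Lf ..
  also have "\<dots> \<longleftrightarrow> (\<forall>B. bil sx sy B \<longrightarrow> S2 B xs = S2 B ys)"
  proof
    assume L: "\<forall>B. bil sx sy (\<lambda>x y. B (x, y)) \<longrightarrow> sum_list (map B xs) = sum_list (map B ys)"
    show "\<forall>B. bil sx sy B \<longrightarrow> S2 B xs = S2 B ys"
      using L[rule_format, of "case_prod _"] by (simp add: S2_def)
  next
    assume R: "\<forall>B. bil sx sy B \<longrightarrow> S2 B xs = S2 B ys"
    show "\<forall>B. bil sx sy (\<lambda>x y. B (x, y)) \<longrightarrow> sum_list (map B xs) = sum_list (map B ys)"
      using R[rule_format, of "\<lambda>x y. _ (x, y)"] by (simp add: S2_def split_def)
  qed
  finally show ?thesis .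
qed

lemma teq3_iff: "teq3 sx sy sz xs ys \<longleftrightarrow> (\<forall>T. tri sx sy sz T \<longrightarrow> S3 T xs = S3 T ys)"
proof -
  have "teq3 sx sy sz xs ys \<longleftrightarrow> (\<forall>B. tri sx sy sz (\<lambda>x y z. B (x, y, z)) \<longrightarrow> sum_list (map B xs) = sum_list (map B ys))"
    unfolding teq3_def teq_gen[OF rel3_fin] rel3_Lf ..
  also have "\<dots> \<longleftrightarrow> (\<forall>T. tri sx sy sz T \<longrightarrow> S3 T xs = S3 T ys)"
  proof
    assume L: "\<forall>B. tri sx sy sz (\<lambda>x y z. B (x, y, z)) \<longrightarrow> sum_list (map B xs) = sum_list (map B ys)"
    show "\<forall>T. tri sx sy sz T \<longrightarrow> S3 T xs = S3 T ys"
      using L[rule_format, of "\<lambda>(x, y, z). _ x y z"] by (simp add: S3_def)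
  next
    assume R: "\<forall>T. tri sx sy sz T \<longrightarrow> S3 T xs = S3 T ys"
    show "\<forall>B. tri sx sy sz (\<lambda>x y z. B (x, y, z)) \<longrightarrow> sum_list (map B xs) = sum_list (map B ys)"
      using R[rule_format, of "\<lambda>x y z. _ (x, y, z)"] by (simp add: S3_def split_def)
  qed
  finally show ?thesis .
qed

lemma teq2D: "teq2 sx sy xs ys \<Longrightarrow> bil sx sy B \<Longrightarrow> S2 B xs = S2 B ys"
  by (simp add: teq2_iff)
lemma teq2I: "(\<And>B. bil sx sy B \<Longrightarrow> S2 B xs = S2 B ys) \<Longrightarrow> teq2 sx sy xs ys"
  by (simp add: teq2_iff)
lemma teq3D: "teq3 sx sy sz xs ys \<Longrightarrow> tri sx sy sz T \<Longrightarrow> S3 T xs = S3 T ys"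
  by (simp add: teq3_iff)
lemma teq3I: "(\<And>T. tri sx sy sz T \<Longrightarrow> S3 T xs = S3 T ys) \<Longrightarrow> teq3 sx sy sz xs ys"
  by (simp add: teq3_iff)

definition lm :: "('k::field \<Rightarrow> 'x::ab_group_add \<Rightarrow> 'x) \<Rightarrow> ('k \<Rightarrow> 'y::ab_group_add \<Rightarrow> 'y) \<Rightarrow> ('x \<Rightarrow> 'y) \<Rightarrow> bool" where
  "lm s1 s2 f \<longleftrightarrow> (\<forall>x y. f (x + y) = f x + f y) \<and> (\<forall>c x. f (s1 c x) = s2 c (f x))"

lemma lin_lm: "lin s f \<longleftrightarrow> lm s (*) f" by (simp add: lin_def lm_def)

lemma linear_lm: "Vector_Spaces.linear s1 s2 f \<Longrightarrow> lm s1 s2 f"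
  unfolding lm_def linear_iff_module_hom by (auto dest: module_hom.add module_hom.scale)

lemma lm_add: "lm s1 s2 f \<Longrightarrow> f (x + y) = f x + f y" by (simp add: lm_def)
lemma lm_scale: "lm s1 s2 f \<Longrightarrow> f (s1 c x) = s2 c (f x)" by (simp add: lm_def)
lemma lin_add: "lin s f \<Longrightarrow> f (x + y) = f x + f y" by (simp add: lin_def)
lemma lin_scale: "lin s f \<Longrightarrow> f (s c x) = c * f x" by (simp add: lin_def)

lemma lm_id: "lm s s (\<lambda>x. x)" by (simp add: lm_def)
lemma lm_comp: "lm s1 s2 f \<Longrightarrow> lm s2 s3 g \<Longrightarrow> lm s1 s3 (\<lambda>x. g (f x))" by (simp add: lm_def)

lemma lin_zero: "lin s f \<Longrightarrow> f 0 = 0"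
proof -
  assume f: "lin s f"
  have "f 0 + f 0 = f 0" using lin_add[OF f, of 0 0] by simp
  then show ?thesis by (metis add_cancel_right_right)
qed

lemma lm_zero': "lm s1 s2 f \<Longrightarrow> f 0 = 0"
proof -
  assume f: "lm s1 s2 f"
  have "f 0 + f 0 = f 0" using lm_add[OF f, of 0 0] by simp
  then show ?thesis by (metis add_cancel_right_right)
qed

lemma lm_neg: "lm s1 s2 f \<Longrightarrow> f (- x) = - f x"
proof -
  assume f: "lm s1 s2 f"
  have "f (- x) + f x = 0" using lm_add[OF f, of "-x" x] lm_zero'[OF f] by simp
  then show ?thesis by (simp add: eq_neg_iff_add_eq_0)
qed

lemma lm_diff: "lm s1 s2 f \<Longrightarrow> f (x - y) = f x - f y"
  using lm_add[of s1 s2 f x "-y"] lm_neg[of s1 s2 f y] by simp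

lemma lin_neg: "lin s f \<Longrightarrow> f (- x) = - f x" using lm_neg unfolding lin_lm by blast
lemma lin_diff: "lin s f \<Longrightarrow> f (x - y) = f x - f y" using lm_diff unfolding lin_lm by blast

lemma lm_sum_list: "lm s1 s2 f \<Longrightarrow> f (sum_list (map g xs)) = sum_list (map (\<lambda>x. f (g x)) xs)"
  by (induct xs) (simp_all add: lm_add lm_zero')

lemma lin_sum_list: "lin s f \<Longrightarrow> f (sum_list (map g xs)) = sum_list (map (\<lambda>x. f (g x)) xs)"
  using lm_sum_list unfolding lin_lm by blast

lemma S2_Nil[simp]: "S2 B [] = 0" by (simp add: S2_def)
lemma S2_Cons[simp]: "S2 B ((x, y) # xs) = B x y + S2 B xs" by (simp add: S2_def)
lemma S2_append[simp]: "S2 B (xs @ ys) = S2 B xs + S2 B ys" by (simp add: S2_def)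
lemma S2_concat_map: "S2 B (concat (map f zs)) = sum_list (map (\<lambda>z. S2 B (f z)) zs)"
  by (induct zs) (simp_all add: S2_def)
lemma S2_concat_map2: "S2 B (concat (map (\<lambda>(x, y). f x y) zs)) = S2 (\<lambda>x y. S2 B (f x y)) zs"
  by (induct zs) (auto simp: S2_def)
lemma S2_map: "S2 B (map (\<lambda>(x, y). (f x, g y)) xs) = S2 (\<lambda>x y. B (f x) (g y)) xs"
  by (induct xs) (auto simp: S2_def)
lemma S2_map2: "S2 B (map (\<lambda>(x, y). (f x y, g x y)) xs) = S2 (\<lambda>x y. B (f x y) (g x y)) xs"
  by (induct xs) (auto simp: S2_def)
lemma S2_add: "S2 (\<lambda>x y. F x y + G x y) xs = S2 F xs + (S2 G xs :: 'k::comm_monoid_add)"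
  by (induct xs) (auto simp: S2_def ac_simps)
lemma S2_diff: "S2 (\<lambda>x y. F x y - G x y) xs = S2 F xs - (S2 G xs :: 'k::ab_group_add)"
  by (induct xs) (auto simp: S2_def)
lemma S2_zero: "S2 (\<lambda>x y. 0) xs = (0 :: 'k::comm_monoid_add)"
  by (induct xs) (auto simp: S2_def)
lemma S2_cmult: "S2 (\<lambda>x y. c * F x y) xs = c * (S2 F xs :: 'k::field)"
  by (induct xs) (auto simp: S2_def algebra_simps)
lemma S2_multc: "S2 (\<lambda>x y. F x y * c) xs = (S2 F xs :: 'k::field) * c"
  by (induct xs) (auto simp: S2_def algebra_simps)
lemma S2_cong: "(\<And>x y. (x, y) \<in> set xs \<Longrightarrow> F x y = G x y) \<Longrightarrow> S2 F xs = S2 G xs"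
  by (induct xs) (auto simp: S2_def)
lemma S2_swap: "S2 (\<lambda>x y. S2 (\<lambda>u v. F x y u v) ys) xs = S2 (\<lambda>u v. S2 (\<lambda>x y. F x y u v) xs) ys"
proof (induct xs)
  case Nil then show ?case by (simp add: S2_zero)
next
  case (Cons p xs) then show ?case by (cases p) (simp add: S2_add)
qed
lemma S2_sum_list: "S2 (\<lambda>x y. sum_list (map (\<lambda>z. F z x y) zs)) xs = sum_list (map (\<lambda>z. S2 (F z) xs) zs)"
proof (induct zs)
  case Nil then show ?case by (simp add: S2_zero)
next
  case (Cons z zs) then show ?case by (simp add: S2_add)
qed

lemma S2_tscale:
  assumes l: "\<And>y. lin sx (\<lambda>x. B x y)" shows "S2 B (tscale sx c xs) = c * S2 B xs"
proof (induct xs)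
  case (Cons p xs)
  obtain a b where p: "p = (a, b)" by (cases p)
  have "B (sx c a) b = c * B a b" using lin_scale[OF l[of b]] by simp
  then show ?case using Cons by (simp add: p tscale_def algebra_simps)
qed (simp add: tscale_def)

lemma S2_tlmult: "S2 B (tlmult mulH lact xs ys) = S2 (\<lambda>h a. S2 (\<lambda>h' w. B (mulH h h') (lact a w)) ys) xs"
  unfolding tlmult_def S2_concat_map2 S2_map2 ..
lemma S2_trmult: "S2 B (trmult mulH ract ys xs) = S2 (\<lambda>h' w. S2 (\<lambda>h a. B (mulH h' h) (ract w a)) xs) ys"
  unfolding trmult_def S2_concat_map2 S2_map2 ..
lemma S2_tid_d: "S2 B (tid_d d xs) = S2 (\<lambda>h a. B h (d a)) xs"
  unfolding tid_d_def S2_map2 ..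

lemma S3_concat_map2: "S3 T (concat (map (\<lambda>(x, y). f x y) zs)) = S2 (\<lambda>x y. S3 T (f x y)) zs"
  by (induct zs) (auto simp: S2_def S3_def)
lemma S3_map_l: "S3 T (map (\<lambda>(u, v). (a, u, v)) xs) = S2 (\<lambda>u v. T a u v) xs"
  by (induct xs) (auto simp: S2_def S3_def)
lemma S3_map_r: "S3 T (map (\<lambda>(u, v). (u, v, a)) xs) = S2 (\<lambda>u v. T u v a) xs"
  by (induct xs) (auto simp: S2_def S3_def)

lemma linI: "(\<And>x y. f (x + y) = f x + f y) \<Longrightarrow> (\<And>c x. f (s c x) = c * f x) \<Longrightarrow> lin s f"
  by (simp add: lin_def)
lemma lmI: "(\<And>x y. f (x + y) = f x + f y) \<Longrightarrow> (\<And>c x. f (s1 c x) = s2 c (f x)) \<Longrightarrow> lm s1 s2 f"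
  by (simp add: lm_def)
lemma bilI: "(\<And>y. lin sx (\<lambda>x. B x y)) \<Longrightarrow> (\<And>x. lin sy (\<lambda>y. B x y)) \<Longrightarrow> bil sx sy B"
  by (simp add: bil_def)
lemma triI: "(\<And>y z. lin sx (\<lambda>x. T x y z)) \<Longrightarrow> (\<And>x z. lin sy (\<lambda>y. T x y z)) \<Longrightarrow> (\<And>x y. lin sz (\<lambda>z. T x y z)) \<Longrightarrow> tri sx sy sz T"
  by (simp add: tri_def)
lemma bil_lin1: "bil sx sy B \<Longrightarrow> lin sx (\<lambda>x. B x y)" by (simp add: bil_def)
lemma bil_lin2: "bil sx sy B \<Longrightarrow> lin sy (\<lambda>y. B x y)" by (simp add: bil_def)
lemma tri_lin1: "tri sx sy sz T \<Longrightarrow> lin sx (\<lambda>x. T x y z)" by (simp add: tri_def)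
lemma tri_lin2: "tri sx sy sz T \<Longrightarrow> lin sy (\<lambda>y. T x y z)" by (simp add: tri_def)
lemma tri_lin3: "tri sx sy sz T \<Longrightarrow> lin sz (\<lambda>z. T x y z)" by (simp add: tri_def)

lemma lin_compose: "lin s2 g \<Longrightarrow> lm s1 s2 f \<Longrightarrow> lin s1 (\<lambda>x. g (f x))"
  by (simp add: lin_def lm_def)

lemma lin_B1: "bil sx sy B \<Longrightarrow> lm s sx f \<Longrightarrow> lin s (\<lambda>z. B (f z) y)"
  using lin_compose[OF bil_lin1] by blast
lemma lin_B2: "bil sx sy B \<Longrightarrow> lm s sy f \<Longrightarrow> lin s (\<lambda>z. B x (f z))"
  using lin_compose[OF bil_lin2] by blast
lemma lin_T1: "tri sx sy sz T \<Longrightarrow> lm s sx f \<Longrightarrow> lin s (\<lambda>w. T (f w) y z)"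
  using lin_compose[OF tri_lin1] by blast
lemma lin_T2: "tri sx sy sz T \<Longrightarrow> lm s sy f \<Longrightarrow> lin s (\<lambda>w. T x (f w) z)"
  using lin_compose[OF tri_lin2] by blast
lemma lin_T3: "tri sx sy sz T \<Longrightarrow> lm s sz f \<Longrightarrow> lin s (\<lambda>w. T x y (f w))"
  using lin_compose[OF tri_lin3] by blast

lemma lin_S2: "(\<And>u v. lin s (\<lambda>x. F u v x)) \<Longrightarrow> lin s (\<lambda>x. S2 (\<lambda>u v. F u v x) xs)"
  unfolding lin_def by (induct xs) (auto simp: S2_def algebra_simps)

lemma lin_plus: "lin s f \<Longrightarrow> lin s g \<Longrightarrow> lin s (\<lambda>x. f x + g x)"
  by (simp add: lin_def algebra_simps)
lemma lin_minus: "lin s f \<Longrightarrow> lin s g \<Longrightarrow> lin s (\<lambda>x. f x - g x)"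
  by (simp add: lin_def algebra_simps)
lemma lin_cmult: "lin s f \<Longrightarrow> lin s (\<lambda>x. c * f x)"
  by (simp add: lin_def algebra_simps)
lemma lin_multc: "lin s f \<Longrightarrow> lin s (\<lambda>x. f x * c)"
  by (simp add: lin_def algebra_simps)

lemma lin_tm:
  assumes t: "tmorphism sm \<mu> sx \<xi> sy \<eta> f" and B: "bil sx sy B"
  shows "lin sm (\<lambda>m. S2 B (f m))"
proof (rule linI)
  fix x y
  have "teq2 sx sy (f (x + y)) (f x @ f y)" using t unfolding tmorphism_def by blast
  from teq2D[OF this B] show "S2 B (f (x + y)) = S2 B (f x) + S2 B (f y)" by simp
next
  fix c x
  have "teq2 sx sy (f (sm c x)) (tscale sx c (f x))" using t unfolding tmorphism_def by blast
  from teq2D[OF this B] show "S2 B (f (sm c x)) = c * S2 B (f x)"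
    using S2_tscale[OF bil_lin1[OF B]] by simp
qed

lemma lin_tm_comp: "tmorphism sm \<mu> sx \<xi> sy \<eta> f \<Longrightarrow> bil sx sy B \<Longrightarrow> lm s sm g \<Longrightarrow> lin s (\<lambda>m. S2 B (f (g m)))"
  using lin_compose[OF lin_tm] by blast

lemma tm_struct:
  assumes t: "tmorphism sm \<mu> sx \<xi> sy \<eta> f" and B: "bil sx sy B"
  shows "S2 B (f (\<mu> m)) = S2 (\<lambda>x y. B (\<xi> x) (\<eta> y)) (f m)"
proof -
  have "teq2 sx sy (f (\<mu> m)) (map (\<lambda>(x, y). (\<xi> x, \<eta> y)) (f m))" using t unfolding tmorphism_def by blast
  from teq2D[OF this B] show ?thesis by (simp add: S2_map)
qed

lemma lm_inv:
  assumes f: "lm s s f" and bf: "bij f"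
  shows "lm s s (inv f)"
proof (rule lmI)
  have a: "f (inv f x) = x" for x using bf by (simp add: bij_is_surj surj_f_inv_f)
  have b: "inv f (f x) = x" for x using bf by (simp add: bij_is_inj)
  fix x y
  have "inv f (x + y) = inv f (f (inv f x) + f (inv f y))" by (simp add: a)
  also have "\<dots> = inv f (f (inv f x + inv f y))" by (simp add: lm_add[OF f])
  finally show "inv f (x + y) = inv f x + inv f y" by (simp add: b)
next
  have a: "f (inv f x) = x" for x using bf by (simp add: bij_is_surj surj_f_inv_f)
  have b: "inv f (f x) = x" for x using bf by (simp add: bij_is_inj)
  fix c x
  have "inv f (s c x) = inv f (s c (f (inv f x)))" by (simp add: a)
  also have "\<dots> = inv f (f (s c (inv f x)))" by (simp add: lm_scale[OF f])
  finally show "inv f (s c x) = s c (inv f x)" by (simp add: b)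
qed

lemma separation:
  assumes v: "vector_space s" and H: "\<And>g. lin s g \<Longrightarrow> g u = (g v :: 'k::field)"
  shows "u = (v :: 'x::ab_group_add)"
proof (rule ccontr)
  assume ne: "u \<noteq> v"
  interpret V: vector_space "s :: 'k \<Rightarrow> 'x \<Rightarrow> 'x" by (rule v)
  interpret vp: vector_space_pair "s :: 'k \<Rightarrow> 'x \<Rightarrow> 'x" "(*) :: 'k \<Rightarrow> 'k \<Rightarrow> 'k"
    by unfold_locales (auto simp: algebra_simps)
  have ind: "V.independent {u - v}" using ne by simp
  obtain g where g: "Vector_Spaces.linear s (*) g" "\<forall>x\<in>{u - v}. g x = 1"
    using vp.linear_independent_extend[OF ind, of "\<lambda>_. 1"] by blast
  have l: "lin s g" unfolding lin_lm by (rule linear_lm[OF g(1)])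
  have "g (u - v) = 1" using g(2) by simp
  moreover have "g (u - v) = 0" using lin_diff[OF l] H[OF l] by simp
  ultimately show False by simp
qed

locale ctx =
  fixes sH :: "'k::field \<Rightarrow> 'h::ab_group_add \<Rightarrow> 'h" and \<beta> :: "'h \<Rightarrow> 'h"
    and mulH :: "'h \<Rightarrow> 'h \<Rightarrow> 'h" and oneH :: 'h
    and \<Delta> :: "'h \<Rightarrow> ('h \<times> 'h) list" and \<epsilon> :: "'h \<Rightarrow> 'k"
    and sA :: "'k \<Rightarrow> 'a::ab_group_add \<Rightarrow> 'a" and \<alpha> :: "'a \<Rightarrow> 'a"
    and mulA :: "'a \<Rightarrow> 'a \<Rightarrow> 'a" and oneA :: 'a
    and \<phi>A :: "'a \<Rightarrow> ('h \<times> 'a) list"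
    and sG :: "'k \<Rightarrow> 'g::ab_group_add \<Rightarrow> 'g" and \<gamma> :: "'g \<Rightarrow> 'g"
    and lact :: "'a \<Rightarrow> 'g \<Rightarrow> 'g" and ract :: "'g \<Rightarrow> 'a \<Rightarrow> 'g" and d :: "'a \<Rightarrow> 'g"
  assumes H: "hom_bialgebra sH \<beta> mulH oneH \<Delta> \<epsilon>"
    and A: "hom_comodule_algebra sH \<beta> mulH oneH \<Delta> \<epsilon> sA \<alpha> mulA oneA \<phi>A"
    and G: "hom_FODC sA \<alpha> mulA oneA sG \<gamma> lact ract d"
begin

lemma hom_object_facts:
  assumes "hom_object s f"
  shows "vector_space s" "lm s s f" "bij f" "lm s s (inv f)" "\<And>x. f (inv f x) = x" "\<And>x. inv f (f x) = x"
proof -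
  show v: "vector_space s" using assms by (simp add: hom_object_def)
  show l: "lm s s f" using assms by (simp add: hom_object_def linear_lm)
  show b: "bij f" using assms by (simp add: hom_object_def)
  show "lm s s (inv f)" using l b by (rule lm_inv)
  show "\<And>x. f (inv f x) = x" using b by (simp add: bij_is_surj surj_f_inv_f)
  show "\<And>x. inv f (f x) = x" using b by (simp add: bij_is_inj)
qed

lemma bilinear_map_facts:
  assumes "bilinear_map sx sy sz f"
  shows "lm sx sz (\<lambda>x. f x y)" "lm sy sz (\<lambda>y. f x y)"
  using assms by (auto simp: bilinear_map_def linear_lm)

lemma Halg: "hom_algebra sH \<beta> mulH oneH" using H by (simp add: hom_bialgebra_def)
lemma Hcoalg: "hom_coalgebra sH \<beta> \<Delta> \<epsilon>" using H by (simp add: hom_bialgebra_def)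
lemma Aalg: "hom_algebra sA \<alpha> mulA oneA" using A by (simp add: hom_comodule_algebra_def)
lemma Acom: "hom_comodule sH \<beta> \<Delta> \<epsilon> sA \<alpha> \<phi>A" using A by (simp add: hom_comodule_algebra_def)
lemma Gbim: "hom_bimodule sA \<alpha> mulA oneA sG \<gamma> lact ract" using G by (simp add: hom_FODC_def)

lemma Hobj: "hom_object sH \<beta>" using Halg by (simp add: hom_algebra_def)
lemma Aobj: "hom_object sA \<alpha>" using Aalg by (simp add: hom_algebra_def)
lemma Gobj: "hom_object sG \<gamma>" using Gbim by (simp add: hom_bimodule_def)

lemmas vsH = hom_object_facts(1)[OF Hobj]
lemmas lm_\<beta> = hom_object_facts(2)[OF Hobj]
lemmas lm_\<beta>i = hom_object_facts(4)[OF Hobj]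
lemmas \<beta>_inv = hom_object_facts(5)[OF Hobj]
lemmas inv_\<beta> = hom_object_facts(6)[OF Hobj]
lemmas vsA = hom_object_facts(1)[OF Aobj]
lemmas lm_\<alpha> = hom_object_facts(2)[OF Aobj]
lemmas lm_\<alpha>i = hom_object_facts(4)[OF Aobj]
lemmas \<alpha>_inv = hom_object_facts(5)[OF Aobj]
lemmas inv_\<alpha> = hom_object_facts(6)[OF Aobj]
lemmas vsG = hom_object_facts(1)[OF Gobj]
lemmas lm_\<gamma> = hom_object_facts(2)[OF Gobj]
lemmas lm_\<gamma>i = hom_object_facts(4)[OF Gobj]
lemmas \<gamma>_inv = hom_object_facts(5)[OF Gobj]
lemmas inv_\<gamma> = hom_object_facts(6)[OF Gobj]

lemma lm_mulH1: "lm sH sH (\<lambda>h. mulH h k)" and lm_mulH2: "lm sH sH (\<lambda>h. mulH k h)"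
  using Halg bilinear_map_facts by (auto simp: hom_algebra_def)
lemma \<beta>_mul: "\<beta> (mulH a b) = mulH (\<beta> a) (\<beta> b)" and assocH: "mulH (\<beta> a) (mulH b c) = mulH (mulH a b) (\<beta> c)"
  and \<beta>_one: "\<beta> oneH = oneH" and unitH1: "mulH oneH a = \<beta> a" and unitH2: "mulH a oneH = \<beta> a"
  using Halg by (auto simp: hom_algebra_def)

lemma lm_mulA1: "lm sA sA (\<lambda>h. mulA h k)" and lm_mulA2: "lm sA sA (\<lambda>h. mulA k h)"
  using Aalg bilinear_map_facts by (auto simp: hom_algebra_def)
lemma \<alpha>_mul: "\<alpha> (mulA a b) = mulA (\<alpha> a) (\<alpha> b)" and assocA: "mulA (\<alpha> a) (mulA b c) = mulA (mulA a b) (\<alpha> c)"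
  and \<alpha>_one: "\<alpha> oneA = oneA" and unitA1: "mulA oneA a = \<alpha> a" and unitA2: "mulA a oneA = \<alpha> a"
  using Aalg by (auto simp: hom_algebra_def)

lemma tm_\<Delta>: "tmorphism sH \<beta> sH \<beta> sH \<beta> \<Delta>" and lin_\<epsilon>: "lin sH \<epsilon>" and \<epsilon>_\<beta>: "\<epsilon> (\<beta> h) = \<epsilon> h"
  using Hcoalg by (auto simp: hom_coalgebra_def lin_lm intro: linear_lm)
lemma \<Delta>_mul: "teq2 sH sH (\<Delta> (mulH a b))
        (concat (map (\<lambda>(x, y). map (\<lambda>(x', y'). (mulH x x', mulH y y')) (\<Delta> b)) (\<Delta> a)))"
  and \<epsilon>_mul: "\<epsilon> (mulH a b) = \<epsilon> a * \<epsilon> b" and \<epsilon>_one: "\<epsilon> oneH = 1"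
  using H by (auto simp: hom_bialgebra_def)

lemma tm_\<phi>A: "tmorphism sA \<alpha> sH \<beta> sA \<alpha> \<phi>A"
  and coassA: "teq3 sH sH sA
        (concat (map (\<lambda>(h, n). map (\<lambda>(u, v). (inv \<beta> h, u, v)) (\<phi>A n)) (\<phi>A m)))
        (concat (map (\<lambda>(h, n). map (\<lambda>(u, v). (u, v, inv \<alpha> n)) (\<Delta> h)) (\<phi>A m)))"
  and counitA: "sum_list (map (\<lambda>(h, n). sA (\<epsilon> h) n) (\<phi>A m)) = inv \<alpha> m"
  using Acom by (auto simp: hom_comodule_def)
lemma mul_\<phi>A: "teq2 sH sA (\<phi>A (mulA a b))
        (concat (map (\<lambda>(h, x). map (\<lambda>(h', y). (mulH h h', mulA x y)) (\<phi>A b)) (\<phi>A a)))"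
  and one_\<phi>A: "teq2 sH sA (\<phi>A oneA) [(oneH, oneA)]"
  using A by (auto simp: hom_comodule_algebra_def)

lemma lm_lact1: "lm sA sG (\<lambda>a. lact a w)" and lm_lact2: "lm sG sG (\<lambda>w. lact a w)"
  and lm_ract1: "lm sG sG (\<lambda>w. ract w a)" and lm_ract2: "lm sA sG (\<lambda>a. ract w a)"
  using Gbim bilinear_map_facts by (auto simp: hom_bimodule_def)
lemma \<gamma>_lact: "\<gamma> (lact a m) = lact (\<alpha> a) (\<gamma> m)" and \<gamma>_ract: "\<gamma> (ract m a) = ract (\<gamma> m) (\<alpha> a)"
  and assocL: "lact (\<alpha> a) (lact b m) = lact (mulA a b) (\<gamma> m)" and unitL: "lact oneA m = \<gamma> m"
  and assocR: "ract (ract m a) (\<alpha> b) = ract (\<gamma> m) (mulA a b)" and unitR: "ract m oneA = \<gamma> m"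
  and bimod: "lact (\<alpha> a) (ract m b) = ract (lact a m) (\<alpha> b)"
  using Gbim by (auto simp: hom_bimodule_def)

lemma lm_d: "lm sA sG d" and leibniz: "d (mulA a b) = lact a (d b) + ract (d a) b"
  and d_\<alpha>: "d (\<alpha> a) = \<gamma> (d a)" and spanG: "module.span sG {ract (lact a (d b)) c | a b c. True} = UNIV"
  using G by (auto simp: hom_FODC_def linear_lm)

end

lemma lmc_id: "lm s s (\<lambda>z. z)" by (rule lm_id)

context ctx begin

lemma lmc_mulH1: "lm s sH f \<Longrightarrow> lm s sH (\<lambda>z. mulH (f z) k)" using lm_comp[OF _ lm_mulH1] by blast
lemma lmc_mulH2: "lm s sH f \<Longrightarrow> lm s sH (\<lambda>z. mulH k (f z))" using lm_comp[OF _ lm_mulH2] by blast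
lemma lmc_mulA1: "lm s sA f \<Longrightarrow> lm s sA (\<lambda>z. mulA (f z) k)" using lm_comp[OF _ lm_mulA1] by blast
lemma lmc_mulA2: "lm s sA f \<Longrightarrow> lm s sA (\<lambda>z. mulA k (f z))" using lm_comp[OF _ lm_mulA2] by blast
lemma lmc_\<beta>: "lm s sH f \<Longrightarrow> lm s sH (\<lambda>z. \<beta> (f z))" using lm_comp[OF _ lm_\<beta>] by blast
lemma lmc_\<beta>i: "lm s sH f \<Longrightarrow> lm s sH (\<lambda>z. inv \<beta> (f z))" using lm_comp[OF _ lm_\<beta>i] by blast
lemma lmc_\<alpha>: "lm s sA f \<Longrightarrow> lm s sA (\<lambda>z. \<alpha> (f z))" using lm_comp[OF _ lm_\<alpha>] by blast
lemma lmc_\<alpha>i: "lm s sA f \<Longrightarrow> lm s sA (\<lambda>z. inv \<alpha> (f z))" using lm_comp[OF _ lm_\<alpha>i] by blast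
lemma lmc_\<gamma>: "lm s sG f \<Longrightarrow> lm s sG (\<lambda>z. \<gamma> (f z))" using lm_comp[OF _ lm_\<gamma>] by blast
lemma lmc_\<gamma>i: "lm s sG f \<Longrightarrow> lm s sG (\<lambda>z. inv \<gamma> (f z))" using lm_comp[OF _ lm_\<gamma>i] by blast
lemma lmc_lact1: "lm s sA f \<Longrightarrow> lm s sG (\<lambda>z. lact (f z) w)" using lm_comp[OF _ lm_lact1] by blast
lemma lmc_lact2: "lm s sG f \<Longrightarrow> lm s sG (\<lambda>z. lact a (f z))" using lm_comp[OF _ lm_lact2] by blast
lemma lmc_ract1: "lm s sG f \<Longrightarrow> lm s sG (\<lambda>z. ract (f z) a)" using lm_comp[OF _ lm_ract1] by blast
lemma lmc_ract2: "lm s sA f \<Longrightarrow> lm s sG (\<lambda>z. ract w (f z))" using lm_comp[OF _ lm_ract2] by blast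
lemma lmc_d: "lm s sA f \<Longrightarrow> lm s sG (\<lambda>z. d (f z))" using lm_comp[OF _ lm_d] by blast

lemma lin_\<epsilon>c: "lm s sH f \<Longrightarrow> lin s (\<lambda>z. \<epsilon> (f z))" using lin_compose[OF lin_\<epsilon>] by blast

lemmas lmc = lmc_id lmc_mulH1 lmc_mulH2 lmc_mulA1 lmc_mulA2 lmc_\<beta> lmc_\<beta>i lmc_\<alpha> lmc_\<alpha>i lmc_\<gamma> lmc_\<gamma>i
  lmc_lact1 lmc_lact2 lmc_ract1 lmc_ract2 lmc_d
lemmas linc = lin_S2 lin_plus lin_minus lin_cmult lin_multc lin_\<epsilon>c lin_tm_comp[OF tm_\<phi>A]

lemma test1: assumes b: "bil sH sG B" shows "bil sH sA (\<lambda>h x. S2 (\<lambda>h' w. B (mulH h h') (lact x w)) Y)"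
  by (intro bilI linc lmc lin_B1[OF b] lin_B2[OF b])

lemma test2: assumes b: "bil sH sG B" shows "bil sH sG (\<lambda>h' w. S2 (\<lambda>h x. S2 (\<lambda>k y. B (mulH h (mulH h' k)) (lact x (ract w y))) (\<phi>A b)) (\<phi>A (\<alpha> a)))"
  by (intro bilI linc lmc lin_B1[OF b] lin_B2[OF b])

end

context ctx begin

lemma PA_lin: "bil sH sA B \<Longrightarrow> lin sA (\<lambda>a. S2 B (\<phi>A a))"
  by (rule lin_tm[OF tm_\<phi>A])

lemma PA_\<alpha>: "bil sH sA B \<Longrightarrow> S2 B (\<phi>A (\<alpha> a)) = S2 (\<lambda>h x. B (\<beta> h) (\<alpha> x)) (\<phi>A a)"
  by (rule tm_struct[OF tm_\<phi>A])

lemma PA_\<alpha>i: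
  assumes b: "bil sH sA B"
  shows "S2 B (\<phi>A (inv \<alpha> a)) = S2 (\<lambda>h x. B (inv \<beta> h) (inv \<alpha> x)) (\<phi>A a)"
proof -
  have b': "bil sH sA (\<lambda>h x. B (inv \<beta> h) (inv \<alpha> x))"
    by (intro bilI linc lmc lin_B1[OF b] lin_B2[OF b])
  from PA_\<alpha>[OF b', of "inv \<alpha> a"] show ?thesis by (simp add: \<alpha>_inv inv_\<beta> inv_\<alpha>)
qed

lemma PA_mul: "bil sH sA B \<Longrightarrow> S2 B (\<phi>A (mulA a b)) = S2 (\<lambda>h x. S2 (\<lambda>h' y. B (mulH h h') (mulA x y)) (\<phi>A b)) (\<phi>A a)"
  using teq2D[OF mul_\<phi>A] by (simp add: S2_concat_map2 S2_map2)

lemma PA_one: "bil sH sA B \<Longrightarrow> S2 B (\<phi>A oneA) = B oneH oneA"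
  using teq2D[OF one_\<phi>A] by simp

lemma PA_coass: "tri sH sH sA T \<Longrightarrow>
  S2 (\<lambda>h n. S2 (\<lambda>u v. T (inv \<beta> h) u v) (\<phi>A n)) (\<phi>A m) = S2 (\<lambda>h n. S2 (\<lambda>u v. T u v (inv \<alpha> n)) (\<Delta> h)) (\<phi>A m)"
  using teq3D[OF coassA, unfolded S3_concat_map2 S3_map_l S3_map_r] by simp

lemma \<Delta>_mulS: "bil sH sH B \<Longrightarrow> S2 B (\<Delta> (mulH a b)) = S2 (\<lambda>x y. S2 (\<lambda>x' y'. B (mulH x x') (mulH y y')) (\<Delta> b)) (\<Delta> a)"
  using teq2D[OF \<Delta>_mul] by (simp add: S2_concat_map2 S2_map2)

definition gsum :: "('a \<times> 'a) list \<Rightarrow> 'g" where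
  "gsum ps = sum_list (map (\<lambda>(a, b). lact a (d b)) ps)"

lemma gsum_Nil[simp]: "gsum [] = 0" by (simp add: gsum_def)
lemma gsum_Cons[simp]: "gsum ((a, b) # ps) = lact a (d b) + gsum ps" by (simp add: gsum_def)
lemma gsum_append[simp]: "gsum (ps @ qs) = gsum ps + gsum qs" by (simp add: gsum_def)

lemma gsum_scale: "sG c (gsum ps) = gsum (map (\<lambda>(a, b). (sA c a, b)) ps)"
proof (induct ps)
  case Nil
  interpret V: vector_space sG by (rule vsG)
  show ?case by simp
next
  case (Cons p ps)
  interpret V: vector_space sG by (rule vsG)
  obtain a b where p: "p = (a, b)" by (cases p)
  have "sG c (lact a (d b)) = lact (sA c a) (d b)" using lm_scale[OF lm_lact1] by simp
  then show ?case using Cons by (simp add: p V.scale_right_distrib)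
qed

lemma gen_gsum: "ract (lact a (d b)) c = gsum [(\<alpha> a, mulA b (inv \<alpha> c)), (sA (-1) (mulA a b), c)]"
proof -
  interpret V: vector_space sG by (rule vsG)
  let ?c = "inv \<alpha> c"
  have "ract (lact a (d b)) c = ract (lact a (d b)) (\<alpha> ?c)" by (simp add: \<alpha>_inv)
  also have "\<dots> = lact (\<alpha> a) (ract (d b) ?c)" by (simp add: bimod)
  also have "ract (d b) ?c = d (mulA b ?c) - lact b (d ?c)" by (simp add: leibniz)
  also have "lact (\<alpha> a) (d (mulA b ?c) - lact b (d ?c)) = lact (\<alpha> a) (d (mulA b ?c)) - lact (\<alpha> a) (lact b (d ?c))"
    by (rule lm_diff[OF lm_lact2])
  also have "lact (\<alpha> a) (lact b (d ?c)) = lact (mulA a b) (d c)"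
    by (simp add: assocL d_\<alpha>[symmetric] \<alpha>_inv)
  also have "lact (sA (-1) (mulA a b)) (d c) = - lact (mulA a b) (d c)"
    using lm_scale[OF lm_lact1, of "-1" "mulA a b" "d c"] by simp
  ultimately show ?thesis by simp
qed

lemma span_gen: "\<exists>ps. \<omega> = gsum ps"
proof -
  interpret V: vector_space sG by (rule vsG)
  have sub: "V.subspace (range gsum)"
    unfolding V.subspace_def
  proof (intro conjI ballI allI)
    show "0 \<in> range gsum" using gsum_Nil by (metis rangeI)
  next
    fix x y assume "x \<in> range gsum" "y \<in> range gsum"
    then obtain ps qs where "x = gsum ps" "y = gsum qs" by blast
    then show "x + y \<in> range gsum" using gsum_append by (metis rangeI)
  next
    fix c x assume "x \<in> range gsum"
    then obtain ps where "x = gsum ps" by blast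
    then show "sG c x \<in> range gsum" using gsum_scale by (metis rangeI)
  qed
  have "{ract (lact a (d b)) c | a b c. True} \<subseteq> range gsum"
  proof clarify
    fix a b c show "ract (lact a (d b)) c \<in> range gsum" unfolding gen_gsum by (rule rangeI)
  qed
  from V.span_minimal[OF this sub] spanG have "UNIV \<subseteq> range gsum" by simp
  then show ?thesis by blast
qed

lemma lin_ext:
  assumes f: "lin sG f" and g: "lin sG g" and e: "\<And>a b. f (lact a (d b)) = g (lact a (d b))"
  shows "f \<omega> = g \<omega>"
proof -
  obtain ps where "\<omega> = gsum ps" using span_gen by blast
  moreover have "f (gsum ps) = g (gsum ps)"
  proof (induct ps)
    case Nil then show ?case by (simp add: lin_zero[OF f] lin_zero[OF g])
  next
    case (Cons p ps) then show ?case by (cases p) (simp add: lin_add[OF f] lin_add[OF g] e)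
  qed
  ultimately show ?thesis by simp
qed

end

context ctx begin

definition W :: "('h \<Rightarrow> 'g \<Rightarrow> 'k) \<Rightarrow> 'a \<Rightarrow> 'a \<Rightarrow> 'k" where
  "W B a b = S2 (\<lambda>h x. S2 (\<lambda>h' y. B (mulH h h') (lact x (d y))) (\<phi>A b)) (\<phi>A a)"

lemma S2_gen: "S2 B (tlmult mulH lact (\<phi>A a) (tid_d d (\<phi>A b))) = W B a b"
  by (simp add: W_def S2_tlmult S2_tid_d)

lemma W_lin1: assumes b: "bil sH sG B" shows "lin sA (\<lambda>a. W B a c)"
  unfolding W_def by (intro PA_lin bilI linc lmc lin_B1[OF b] lin_B2[OF b])

lemma S2_gsum: "lin sG f \<Longrightarrow> S2 (\<lambda>a b. f (lact a (d b))) ps = f (gsum ps)"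
proof (induct ps)
  case Nil then show ?case by (simp add: lin_zero)
next
  case (Cons p ps) then show ?case by (cases p) (simp add: lin_add)
qed

abbreviation E2 where
  "E2 \<phi> \<equiv> tmorphism sG \<gamma> sH \<beta> sG \<gamma> \<phi> \<and>
     (\<forall>a b. teq2 sH sG (\<phi> (lact a (d b))) (tlmult mulH lact (\<phi>A a) (tid_d d (\<phi>A b))))"

abbreviation E3 where
  "E3 \<equiv> (\<forall>ps :: ('a \<times> 'a) list.
                   sum_list (map (\<lambda>(a, b). lact a (d b)) ps) = 0 \<longrightarrow>
                   teq2 sH sG
                     (concat (map (\<lambda>(a, b). tlmult mulH lact (\<phi>A a) (tid_d d (\<phi>A b))) ps)) [])"

lemma E2_E3:
  assumes tm: "tmorphism sG \<gamma> sH \<beta> sG \<gamma> \<phi>"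
    and gen: "\<forall>a b. teq2 sH sG (\<phi> (lact a (d b))) (tlmult mulH lact (\<phi>A a) (tid_d d (\<phi>A b)))"
  shows E3
proof (intro allI impI teq2I)
  fix ps :: "('a \<times> 'a) list" and B
  assume z: "sum_list (map (\<lambda>(a, b). lact a (d b)) ps) = 0" and b: "bil sH sG B"
  have l: "lin sG (\<lambda>m. S2 B (\<phi> m))" by (rule lin_tm[OF tm b])
  have "S2 B (concat (map (\<lambda>(a, b). tlmult mulH lact (\<phi>A a) (tid_d d (\<phi>A b))) ps))
      = S2 (\<lambda>a b. S2 B (\<phi> (lact a (d b)))) ps"
    unfolding S2_concat_map2 using teq2D[OF gen[rule_format] b] by simp
  also have "\<dots> = S2 B (\<phi> (gsum ps))" by (rule S2_gsum[OF l])
  also have "gsum ps = 0" using z by (simp add: gsum_def)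
  finally show "S2 B (concat (map (\<lambda>(a, b). tlmult mulH lact (\<phi>A a) (tid_d d (\<phi>A b))) ps)) = S2 B []"
    using lin_zero[OF l] by simp
qed

definition rep :: "'g \<Rightarrow> ('a \<times> 'a) list" where "rep \<omega> = (SOME ps. \<omega> = gsum ps)"
lemma rep: "gsum (rep \<omega>) = \<omega>" unfolding rep_def using someI_ex[OF span_gen] by metis

definition Fp :: "('a \<times> 'a) list \<Rightarrow> ('h \<times> 'g) list" where
  "Fp ps = concat (map (\<lambda>(a, b). tlmult mulH lact (\<phi>A a) (tid_d d (\<phi>A b))) ps)"

lemma S2_Fp: "S2 B (Fp ps) = S2 (W B) ps"
  unfolding Fp_def S2_concat_map2 S2_gen ..

lemma E3_key:
  assumes e3: E3 and eq: "gsum ps = gsum qs" and b: "bil sH sG B"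
  shows "S2 (W B) ps = S2 (W B) qs"
proof -
  interpret V: vector_space sG by (rule vsG)
  let ?nq = "map (\<lambda>(a, b). (sA (-1) a, b)) qs"
  have "gsum (ps @ ?nq) = 0" using eq gsum_scale[of "-1" qs, symmetric] by simp
  then have "teq2 sH sG (Fp (ps @ ?nq)) []" using e3 unfolding Fp_def gsum_def by blast
  from teq2D[OF this b] have "S2 (W B) ps + S2 (W B) ?nq = 0" by (simp add: S2_Fp)
  moreover have "S2 (W B) ?nq = - S2 (W B) qs"
  proof -
    have "S2 (W B) ?nq = S2 (\<lambda>a c. W B (sA (-1) a) c) qs" by (simp add: S2_map)
    also have "\<dots> = S2 (\<lambda>a c. (-1) * W B a c) qs" using lin_scale[OF W_lin1[OF b]] by simp
    also have "\<dots> = - S2 (W B) qs" using S2_cmult[of "-1" "W B" qs] by simp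
    finally show ?thesis .
  qed
  ultimately show ?thesis by (simp add: add_eq_0_iff)
qed

lemma E3_E2:
  assumes e3: E3
  shows "E2 (\<lambda>\<omega>. Fp (rep \<omega>))"
proof (intro conjI allI)
  interpret V: vector_space sG by (rule vsG)
  show "tmorphism sG \<gamma> sH \<beta> sG \<gamma> (\<lambda>\<omega>. Fp (rep \<omega>))"
    unfolding tmorphism_def
  proof (intro conjI allI teq2I)
    fix m n B assume b: "bil sH sG B"
    have "S2 (W B) (rep (m + n)) = S2 (W B) (rep m @ rep n)"
      by (rule E3_key[OF e3 _ b]) (simp add: rep)
    then show "S2 B (Fp (rep (m + n))) = S2 B (Fp (rep m) @ Fp (rep n))"
      by (simp add: S2_Fp)
  next
    fix c m B assume b: "bil sH sG B"
    have "S2 (W B) (rep (sG c m)) = S2 (W B) (map (\<lambda>(a, b). (sA c a, b)) (rep m))"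
      by (rule E3_key[OF e3 _ b]) (simp add: rep gsum_scale[symmetric])
    also have "\<dots> = S2 (\<lambda>a e. c * W B a e) (rep m)"
      using lin_scale[OF W_lin1[OF b]] by (simp add: S2_map)
    also have "\<dots> = S2 B (tscale sH c (Fp (rep m)))"
      by (simp add: S2_cmult S2_Fp S2_tscale[OF bil_lin1[OF b]])
    finally show "S2 B (Fp (rep (sG c m))) = S2 B (tscale sH c (Fp (rep m)))" by (simp add: S2_Fp)
  next
    fix m B assume b: "bil sH sG B"
    have b': "bil sH sG (\<lambda>h w. B (\<beta> h) (\<gamma> w))"
      by (intro bilI linc lmc lin_B1[OF b] lin_B2[OF b])
    have g: "gsum (map (\<lambda>(a, b). (\<alpha> a, \<alpha> b)) ps) = \<gamma> (gsum ps)" for ps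
      by (induct ps) (auto simp: lm_add[OF lm_\<gamma>] lm_zero'[OF lm_\<gamma>] \<gamma>_lact d_\<alpha>)
    have "S2 (W B) (rep (\<gamma> m)) = S2 (W B) (map (\<lambda>(a, b). (\<alpha> a, \<alpha> b)) (rep m))"
      by (rule E3_key[OF e3 _ b]) (simp add: rep g)
    also have "\<dots> = S2 (\<lambda>a e. W B (\<alpha> a) (\<alpha> e)) (rep m)" by (simp add: S2_map)
    also have "\<dots> = S2 (W (\<lambda>h w. B (\<beta> h) (\<gamma> w))) (rep m)"
    proof (rule S2_cong)
      fix a e
      have "W B (\<alpha> a) (\<alpha> e) = S2 (\<lambda>h x. S2 (\<lambda>h' y. B (mulH (\<beta> h) h') (lact (\<alpha> x) (d y))) (\<phi>A (\<alpha> e))) (\<phi>A a)"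
        unfolding W_def by (rule PA_\<alpha>) (intro bilI linc lmc lin_B1[OF b] lin_B2[OF b])
      also have "\<dots> = S2 (\<lambda>h x. S2 (\<lambda>h' y. B (mulH (\<beta> h) (\<beta> h')) (lact (\<alpha> x) (d (\<alpha> y)))) (\<phi>A e)) (\<phi>A a)"
      proof (rule S2_cong)
        fix h x show "S2 (\<lambda>h' y. B (mulH (\<beta> h) h') (lact (\<alpha> x) (d y))) (\<phi>A (\<alpha> e)) =
          S2 (\<lambda>h' y. B (mulH (\<beta> h) (\<beta> h')) (lact (\<alpha> x) (d (\<alpha> y)))) (\<phi>A e)"
          by (rule PA_\<alpha>) (intro bilI linc lmc lin_B1[OF b] lin_B2[OF b])
      qed
      also have "\<dots> = W (\<lambda>h w. B (\<beta> h) (\<gamma> w)) a e"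
        unfolding W_def by (simp add: \<beta>_mul \<gamma>_lact d_\<alpha>)
      finally show "W B (\<alpha> a) (\<alpha> e) = W (\<lambda>h w. B (\<beta> h) (\<gamma> w)) a e" .
    qed
    finally show "S2 B (Fp (rep (\<gamma> m))) = S2 B (map (\<lambda>(x, y). (\<beta> x, \<gamma> y)) (Fp (rep m)))"
      by (simp add: S2_Fp S2_map)
  qed
next
  fix a b
  show "teq2 sH sG (Fp (rep (lact a (d b)))) (tlmult mulH lact (\<phi>A a) (tid_d d (\<phi>A b)))"
  proof (rule teq2I)
    fix B assume b: "bil sH sG B"
    have "S2 (W B) (rep (lact a (d b))) = S2 (W B) [(a, b)]"
      by (rule E3_key[OF e3 _ b]) (simp add: rep)
    then show "S2 B (Fp (rep (lact a (d b)))) = S2 B (tlmult mulH lact (\<phi>A a) (tid_d d (\<phi>A b)))"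
      by (simp add: S2_Fp S2_gen)
  qed
qed

end

context ctx begin

lemma LC_E2:
  assumes hc: "hom_comodule sH \<beta> \<Delta> \<epsilon> sG \<gamma> \<phi>"
    and cov: "\<forall>a b \<omega>. teq2 sH sG (\<phi> (lact (\<alpha> a) (ract \<omega> b)))
            (tlmult mulH lact (\<phi>A (\<alpha> a)) (trmult mulH ract (\<phi> \<omega>) (\<phi>A b)))"
    and covd: "\<forall>a. teq2 sH sG (\<phi> (d a)) (tid_d d (\<phi>A a))"
  shows "E2 \<phi>"
proof (intro conjI allI)
  show tm: "tmorphism sG \<gamma> sH \<beta> sG \<gamma> \<phi>" using hc by (simp add: hom_comodule_def)
  fix a b
  show "teq2 sH sG (\<phi> (lact a (d b))) (tlmult mulH lact (\<phi>A a) (tid_d d (\<phi>A b)))"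
  proof (rule teq2I)
    fix B assume b: "bil sH sG B"
    let ?\<omega> = "inv \<gamma> (d b)"
    have eq: "lact a (d b) = lact (\<alpha> (inv \<alpha> a)) (ract ?\<omega> oneA)" by (simp add: unitR \<gamma>_inv \<alpha>_inv)
    have inner: "S2 (\<lambda>h' w. B (mulH h h') (lact x w)) (trmult mulH ract (\<phi> ?\<omega>) (\<phi>A oneA))
       = S2 (\<lambda>h' y. B (mulH h h') (lact x (d y))) (\<phi>A b)" for h x
    proof -
      have bc: "bil sH sG (\<lambda>h' w. B (mulH h h') (lact x w))"
        by (intro bilI linc lmc lin_B1[OF b] lin_B2[OF b])
      have "S2 (\<lambda>h' w. B (mulH h h') (lact x w)) (trmult mulH ract (\<phi> ?\<omega>) (\<phi>A oneA))
         = S2 (\<lambda>h' w. S2 (\<lambda>k y. B (mulH h (mulH h' k)) (lact x (ract w y))) (\<phi>A oneA)) (\<phi> ?\<omega>)"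
        by (simp add: S2_trmult)
      also have "\<dots> = S2 (\<lambda>h' w. B (mulH h (mulH h' oneH)) (lact x (ract w oneA))) (\<phi> ?\<omega>)"
        by (rule S2_cong, rule PA_one) (intro bilI linc lmc lin_B1[OF b] lin_B2[OF b])
      also have "\<dots> = S2 (\<lambda>h' w. B (mulH h (\<beta> h')) (lact x (\<gamma> w))) (\<phi> ?\<omega>)"
        by (simp add: unitH2 unitR)
      also have "\<dots> = S2 (\<lambda>h' w. B (mulH h h') (lact x w)) (\<phi> (\<gamma> ?\<omega>))"
        by (rule tm_struct[OF tm bc, symmetric])
      also have "\<dots> = S2 (\<lambda>h' w. B (mulH h h') (lact x w)) (tid_d d (\<phi>A b))"
        using teq2D[OF covd[rule_format] bc] by (simp add: \<gamma>_inv)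
      finally show ?thesis by (simp add: S2_tid_d)
    qed
    have "S2 B (\<phi> (lact a (d b))) = S2 B (tlmult mulH lact (\<phi>A (\<alpha> (inv \<alpha> a))) (trmult mulH ract (\<phi> ?\<omega>) (\<phi>A oneA)))"
      unfolding eq by (rule teq2D[OF cov[rule_format] b])
    also have "\<dots> = W B a b" by (simp add: S2_tlmult \<alpha>_inv inner W_def)
    finally show "S2 B (\<phi> (lact a (d b))) = S2 B (tlmult mulH lact (\<phi>A a) (tid_d d (\<phi>A b)))"
      by (simp add: S2_gen)
  qed
qed

end

context ctx begin

lemma gen_diff: "ract (lact a (d b)) c = lact (\<alpha> a) (d (mulA b (inv \<alpha> c))) - lact (mulA a b) (d c)"
proof -
  interpret V: vector_space sG by (rule vsG)
  have "lact (sA (-1) (mulA a b)) (d c) = - lact (mulA a b) (d c)"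
    using lm_scale[OF lm_lact1, of "-1" "mulA a b" "d c"] by simp
  then show ?thesis unfolding gen_gsum by simp
qed

end

locale ctx2 = ctx +
  fixes \<phi>
  assumes tm\<phi>: "tmorphism sG \<gamma> sH \<beta> sG \<gamma> \<phi>"
    and gen\<phi>: "\<forall>a b. teq2 sH sG (\<phi> (lact a (d b))) (tlmult mulH lact (\<phi>A a) (tid_d d (\<phi>A b)))"
begin

lemma \<Phi>_gen: "bil sH sG B \<Longrightarrow> S2 B (\<phi> (lact a (d b))) = W B a b"
  using teq2D[OF gen\<phi>[rule_format]] S2_gen by metis

lemmas linc\<phi> = lin_tm_comp[OF tm\<phi>]

lemma L\<phi>:
  assumes b: "bil sH sG B"
  shows "S2 B (\<phi> (lact a \<omega>)) = S2 (\<lambda>h x. S2 (\<lambda>h' w. B (mulH h h') (lact x w)) (\<phi> \<omega>)) (\<phi>A a)"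
proof (rule lin_ext[where f = "\<lambda>\<omega>. S2 B (\<phi> (lact a \<omega>))"])
  show "lin sG (\<lambda>\<omega>. S2 B (\<phi> (lact a \<omega>)))"
    by (intro linc lmc linc\<phi> lin_B1[OF b] lin_B2[OF b] bilI)
  show "lin sG (\<lambda>\<omega>. S2 (\<lambda>h x. S2 (\<lambda>h' w. B (mulH h h') (lact x w)) (\<phi> \<omega>)) (\<phi>A a))"
    by (intro linc lmc linc\<phi> lin_B1[OF b] lin_B2[OF b] bilI)
  fix a' b'
  have eq: "lact a (lact a' (d b')) = lact (mulA (inv \<alpha> a) a') (d (\<alpha> b'))"
    by (metis \<alpha>_inv assocL d_\<alpha>)
  have "S2 B (\<phi> (lact a (lact a' (d b')))) = W B (mulA (inv \<alpha> a) a') (\<alpha> b')"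
    unfolding eq by (rule \<Phi>_gen[OF b])
  also have "\<dots> = S2 (\<lambda>h1 x1. S2 (\<lambda>h2 x2. S2 (\<lambda>h' y. B (mulH (mulH h1 h2) h') (lact (mulA x1 x2) (d y))) (\<phi>A (\<alpha> b'))) (\<phi>A a')) (\<phi>A (inv \<alpha> a))"
    unfolding W_def by (rule PA_mul) (intro linc lmc linc\<phi> lin_B1[OF b] lin_B2[OF b] bilI)
  also have "\<dots> = S2 (\<lambda>h1 x1. S2 (\<lambda>h2 x2. S2 (\<lambda>h' y. B (mulH (mulH (inv \<beta> h1) h2) h') (lact (mulA (inv \<alpha> x1) x2) (d y))) (\<phi>A (\<alpha> b'))) (\<phi>A a')) (\<phi>A a)"
    by (rule PA_\<alpha>i) (intro linc lmc linc\<phi> lin_B1[OF b] lin_B2[OF b] bilI)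
  also have "\<dots> = S2 (\<lambda>h1 x1. S2 (\<lambda>h2 x2. S2 (\<lambda>k y. B (mulH (mulH (inv \<beta> h1) h2) (\<beta> k)) (lact (mulA (inv \<alpha> x1) x2) (d (\<alpha> y)))) (\<phi>A b')) (\<phi>A a')) (\<phi>A a)"
    by (intro S2_cong PA_\<alpha>) (intro linc lmc linc\<phi> lin_B1[OF b] lin_B2[OF b] bilI)
  also have "\<dots> = S2 (\<lambda>h x. S2 (\<lambda>h2 x2. S2 (\<lambda>k y. B (mulH h (mulH h2 k)) (lact x (lact x2 (d y)))) (\<phi>A b')) (\<phi>A a')) (\<phi>A a)"
    by (simp add: d_\<alpha> assocL[symmetric] assocH[symmetric] \<beta>_inv \<alpha>_inv)
  also have "\<dots> = S2 (\<lambda>h x. S2 (\<lambda>h' w. B (mulH h h') (lact x w)) (\<phi> (lact a' (d b')))) (\<phi>A a)"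
  proof (rule S2_cong)
    fix h x
    have bc: "bil sH sG (\<lambda>h' w. B (mulH h h') (lact x w))"
      by (intro linc lmc lin_B1[OF b] lin_B2[OF b] bilI)
    show "S2 (\<lambda>h2 x2. S2 (\<lambda>k y. B (mulH h (mulH h2 k)) (lact x (lact x2 (d y)))) (\<phi>A b')) (\<phi>A a') =
        S2 (\<lambda>h' w. B (mulH h h') (lact x w)) (\<phi> (lact a' (d b')))"
      unfolding \<Phi>_gen[OF bc] W_def ..
  qed
  finally show "S2 B (\<phi> (lact a (lact a' (d b')))) =
    S2 (\<lambda>h x. S2 (\<lambda>h' w. B (mulH h h') (lact x w)) (\<phi> (lact a' (d b')))) (\<phi>A a)" .
qed


lemma \<Phi>_lin: "bil sH sG B \<Longrightarrow> lin sG (\<lambda>m. S2 B (\<phi> m))"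
  by (rule lin_tm[OF tm\<phi>])

lemma R\<phi>:
  assumes b: "bil sH sG B"
  shows "S2 B (\<phi> (ract \<omega> c)) = S2 (\<lambda>h' w. S2 (\<lambda>k y. B (mulH h' k) (ract w y)) (\<phi>A c)) (\<phi> \<omega>)"
proof (rule lin_ext[where f = "\<lambda>\<omega>. S2 B (\<phi> (ract \<omega> c))"])
  show "lin sG (\<lambda>\<omega>. S2 B (\<phi> (ract \<omega> c)))"
    by (intro linc lmc linc\<phi> lin_B1[OF b] lin_B2[OF b] bilI)
  show "lin sG (\<lambda>\<omega>. S2 (\<lambda>h' w. S2 (\<lambda>k y. B (mulH h' k) (ract w y)) (\<phi>A c)) (\<phi> \<omega>))"
    by (intro linc lmc linc\<phi> lin_B1[OF b] lin_B2[OF b] bilI)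
  fix a' b'
  have l: "lin sG (\<lambda>m. S2 B (\<phi> m))" by (rule \<Phi>_lin[OF b])
  have "S2 B (\<phi> (ract (lact a' (d b')) c)) =
     S2 B (\<phi> (lact (\<alpha> a') (d (mulA b' (inv \<alpha> c))))) - S2 B (\<phi> (lact (mulA a' b') (d c)))"
    unfolding gen_diff by (rule lin_diff[OF l])
  also have "S2 B (\<phi> (lact (\<alpha> a') (d (mulA b' (inv \<alpha> c))))) =
     S2 (\<lambda>h x. S2 (\<lambda>k y. S2 (\<lambda>k2 y2. B (mulH (\<beta> h) (mulH k (inv \<beta> k2))) (lact (\<alpha> x) (d (mulA y (inv \<alpha> y2))))) (\<phi>A c)) (\<phi>A b')) (\<phi>A a')"
  proof -
    have "S2 B (\<phi> (lact (\<alpha> a') (d (mulA b' (inv \<alpha> c))))) =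
      S2 (\<lambda>h x. S2 (\<lambda>h2 y2. B (mulH h h2) (lact x (d y2))) (\<phi>A (mulA b' (inv \<alpha> c)))) (\<phi>A (\<alpha> a'))"
      unfolding \<Phi>_gen[OF b] W_def ..
    also have "\<dots> = S2 (\<lambda>h x. S2 (\<lambda>h2 y2. B (mulH (\<beta> h) h2) (lact (\<alpha> x) (d y2))) (\<phi>A (mulA b' (inv \<alpha> c)))) (\<phi>A a')"
      by (rule PA_\<alpha>) (intro linc lmc linc\<phi> lin_B1[OF b] lin_B2[OF b] bilI)
    also have "\<dots> = S2 (\<lambda>h x. S2 (\<lambda>k y. S2 (\<lambda>k3 y3. B (mulH (\<beta> h) (mulH k k3)) (lact (\<alpha> x) (d (mulA y y3)))) (\<phi>A (inv \<alpha> c))) (\<phi>A b')) (\<phi>A a')"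
      by (intro S2_cong PA_mul) (intro linc lmc linc\<phi> lin_B1[OF b] lin_B2[OF b] bilI)
    also have "\<dots> = S2 (\<lambda>h x. S2 (\<lambda>k y. S2 (\<lambda>k2 y2. B (mulH (\<beta> h) (mulH k (inv \<beta> k2))) (lact (\<alpha> x) (d (mulA y (inv \<alpha> y2))))) (\<phi>A c)) (\<phi>A b')) (\<phi>A a')"
      by (intro S2_cong PA_\<alpha>i) (intro linc lmc linc\<phi> lin_B1[OF b] lin_B2[OF b] bilI)
    finally show ?thesis .
  qed
  also have "S2 B (\<phi> (lact (mulA a' b') (d c))) =
     S2 (\<lambda>h x. S2 (\<lambda>k y. S2 (\<lambda>k2 y2. B (mulH (mulH h k) k2) (lact (mulA x y) (d y2))) (\<phi>A c)) (\<phi>A b')) (\<phi>A a')"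
    unfolding \<Phi>_gen[OF b] W_def by (rule PA_mul) (intro linc lmc linc\<phi> lin_B1[OF b] lin_B2[OF b] bilI)
  also have "S2 (\<lambda>h x. S2 (\<lambda>k y. S2 (\<lambda>k2 y2. B (mulH (\<beta> h) (mulH k (inv \<beta> k2))) (lact (\<alpha> x) (d (mulA y (inv \<alpha> y2))))) (\<phi>A c)) (\<phi>A b')) (\<phi>A a')
     - S2 (\<lambda>h x. S2 (\<lambda>k y. S2 (\<lambda>k2 y2. B (mulH (mulH h k) k2) (lact (mulA x y) (d y2))) (\<phi>A c)) (\<phi>A b')) (\<phi>A a')
     = S2 (\<lambda>h x. S2 (\<lambda>k y. S2 (\<lambda>k2 y2. B (mulH (mulH h k) k2) (lact (\<alpha> x) (d (mulA y (inv \<alpha> y2)))) - B (mulH (mulH h k) k2) (lact (mulA x y) (d y2))) (\<phi>A c)) (\<phi>A b')) (\<phi>A a')"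
    by (simp only: S2_diff assocH \<beta>_inv)
  also have "\<dots> = S2 (\<lambda>h x. S2 (\<lambda>k y. S2 (\<lambda>k2 y2. B (mulH (mulH h k) k2) (ract (lact x (d y)) y2)) (\<phi>A c)) (\<phi>A b')) (\<phi>A a')"
    unfolding gen_diff lin_diff[OF bil_lin2[OF b]] ..
  also have "\<dots> = S2 (\<lambda>h' w. S2 (\<lambda>k y. B (mulH h' k) (ract w y)) (\<phi>A c)) (\<phi> (lact a' (d b')))"
  proof -
    have bc: "bil sH sG (\<lambda>h' w. S2 (\<lambda>k y. B (mulH h' k) (ract w y)) (\<phi>A c))"
      by (intro linc lmc lin_B1[OF b] lin_B2[OF b] bilI)
    show ?thesis unfolding \<Phi>_gen[OF bc] W_def ..
  qed
  finally show "S2 B (\<phi> (ract (lact a' (d b')) c)) =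
    S2 (\<lambda>h' w. S2 (\<lambda>k y. B (mulH h' k) (ract w y)) (\<phi>A c)) (\<phi> (lact a' (d b')))" .
qed

lemma cov\<phi>: "teq2 sH sG (\<phi> (lact (\<alpha> a) (ract \<omega> b)))
            (tlmult mulH lact (\<phi>A (\<alpha> a)) (trmult mulH ract (\<phi> \<omega>) (\<phi>A b)))"
proof (rule teq2I)
  fix B assume b: "bil sH sG B"
  have "S2 B (\<phi> (lact (\<alpha> a) (ract \<omega> b))) =
    S2 (\<lambda>h x. S2 (\<lambda>h' w. B (mulH h h') (lact x w)) (\<phi> (ract \<omega> b))) (\<phi>A (\<alpha> a))"
    by (rule L\<phi>[OF b])
  also have "\<dots> = S2 (\<lambda>h x. S2 (\<lambda>h' w. S2 (\<lambda>k y. B (mulH h (mulH h' k)) (lact x (ract w y))) (\<phi>A b)) (\<phi> \<omega>)) (\<phi>A (\<alpha> a))"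
    by (intro S2_cong R\<phi>) (intro linc lmc lin_B1[OF b] lin_B2[OF b] bilI)
  finally show "S2 B (\<phi> (lact (\<alpha> a) (ract \<omega> b))) =
    S2 B (tlmult mulH lact (\<phi>A (\<alpha> a)) (trmult mulH ract (\<phi> \<omega>) (\<phi>A b)))"
    by (simp add: S2_tlmult S2_trmult)
qed

lemma covd\<phi>: "teq2 sH sG (\<phi> (d a)) (tid_d d (\<phi>A a))"
proof (rule teq2I)
  fix B assume b: "bil sH sG B"
  have eq: "d a = lact oneA (d (inv \<alpha> a))" by (simp add: unitL d_\<alpha>[symmetric] \<alpha>_inv)
  have "S2 B (\<phi> (d a)) = S2 (\<lambda>h x. S2 (\<lambda>h' y. B (mulH h h') (lact x (d y))) (\<phi>A (inv \<alpha> a))) (\<phi>A oneA)"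
    unfolding eq \<Phi>_gen[OF b] W_def ..
  also have "\<dots> = S2 (\<lambda>h' y. B (mulH oneH h') (lact oneA (d y))) (\<phi>A (inv \<alpha> a))"
    by (rule PA_one) (intro linc lmc linc\<phi> lin_B1[OF b] lin_B2[OF b] bilI)
  also have "\<dots> = S2 (\<lambda>h' y. B (\<beta> h') (d (\<alpha> y))) (\<phi>A (inv \<alpha> a))"
    by (simp add: unitH1 unitL d_\<alpha>)
  also have "\<dots> = S2 (\<lambda>h' y. B (\<beta> (inv \<beta> h')) (d (\<alpha> (inv \<alpha> y)))) (\<phi>A a)"
    by (rule PA_\<alpha>i) (intro linc lmc linc\<phi> lin_B1[OF b] lin_B2[OF b] bilI)
  finally show "S2 B (\<phi> (d a)) = S2 B (tid_d d (\<phi>A a))"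
    by (simp add: \<beta>_inv \<alpha>_inv S2_tid_d)
qed

end

context ctx begin

lemma \<beta>i_mul: "inv \<beta> (mulH a b) = mulH (inv \<beta> a) (inv \<beta> b)"
  by (metis \<beta>_mul \<beta>_inv inv_\<beta>)

lemma \<gamma>i_gen: "inv \<gamma> (lact x (d y)) = lact (inv \<alpha> x) (d (inv \<alpha> y))"
proof -
  have "\<gamma> (lact (inv \<alpha> x) (d (inv \<alpha> y))) = lact x (d y)"
    by (simp add: \<gamma>_lact d_\<alpha>[symmetric] \<alpha>_inv)
  then show ?thesis by (metis inv_\<gamma>)
qed

lemma eps_sum: "lin sA l \<Longrightarrow> l (sum_list (map (\<lambda>(h, n). sA (\<epsilon> h) n) xs)) = S2 (\<lambda>h n. \<epsilon> h * l n) xs"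
proof (induct xs)
  case Nil then show ?case by (simp add: lin_zero)
next
  case (Cons p xs) then show ?case by (cases p) (simp add: lin_add lin_scale)
qed

end

context ctx2 begin

lemma coass\<phi>: "teq3 sH sH sG (concat (map (\<lambda>(h, n). map (\<lambda>(u, v). (inv \<beta> h, u, v)) (\<phi> n)) (\<phi> m)))
        (concat (map (\<lambda>(h, n). map (\<lambda>(u, v). (u, v, inv \<gamma> n)) (\<Delta> h)) (\<phi> m)))"
proof (rule teq3I)
  fix T assume t: "tri sH sH sG T"
  show "S3 T (concat (map (\<lambda>(h, n). map (\<lambda>(u, v). (inv \<beta> h, u, v)) (\<phi> n)) (\<phi> m))) =
        S3 T (concat (map (\<lambda>(h, n). map (\<lambda>(u, v). (u, v, inv \<gamma> n)) (\<Delta> h)) (\<phi> m)))"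
    unfolding S3_concat_map2 S3_map_l S3_map_r
  proof (rule lin_ext[where f = "\<lambda>m. S2 (\<lambda>h n. S2 (\<lambda>u v. T (inv \<beta> h) u v) (\<phi> n)) (\<phi> m)"
        and g = "\<lambda>m. S2 (\<lambda>h n. S2 (\<lambda>u v. T u v (inv \<gamma> n)) (\<Delta> h)) (\<phi> m)"])
    show "lin sG (\<lambda>m. S2 (\<lambda>h n. S2 (\<lambda>u v. T (inv \<beta> h) u v) (\<phi> n)) (\<phi> m))"
      by (intro linc lmc linc\<phi> lin_T1[OF t] lin_T2[OF t] lin_T3[OF t] bilI)
    show "lin sG (\<lambda>m. S2 (\<lambda>h n. S2 (\<lambda>u v. T u v (inv \<gamma> n)) (\<Delta> h)) (\<phi> m))"
      by (intro linc lmc linc\<phi> lin_tm_comp[OF tm_\<Delta>] lin_T1[OF t] lin_T2[OF t] lin_T3[OF t] bilI)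
    fix a b
    let ?N = "S2 (\<lambda>h x. S2 (\<lambda>u v. S2 (\<lambda>h' y. S2 (\<lambda>u' v'. T (mulH u u') (mulH v v') (lact (inv \<alpha> x) (d (inv \<alpha> y)))) (\<Delta> h')) (\<phi>A b)) (\<Delta> h)) (\<phi>A a)"
    have "S2 (\<lambda>h n. S2 (\<lambda>u v. T (inv \<beta> h) u v) (\<phi> n)) (\<phi> (lact a (d b)))
       = S2 (\<lambda>h x. S2 (\<lambda>h' y. S2 (\<lambda>u v. T (inv \<beta> (mulH h h')) u v) (\<phi> (lact x (d y)))) (\<phi>A b)) (\<phi>A a)"
      by (subst \<Phi>_gen) (intro linc lmc linc\<phi> lin_T1[OF t] lin_T2[OF t] lin_T3[OF t] bilI, simp add: W_def)
    also have "\<dots> = S2 (\<lambda>h x. S2 (\<lambda>h' y. S2 (\<lambda>k x'. S2 (\<lambda>k' y'. T (mulH (inv \<beta> h) (inv \<beta> h')) (mulH k k') (lact x' (d y'))) (\<phi>A y)) (\<phi>A x)) (\<phi>A b)) (\<phi>A a)"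
      by (intro S2_cong, subst \<Phi>_gen) (intro linc lmc linc\<phi> lin_T1[OF t] lin_T2[OF t] lin_T3[OF t] bilI, simp add: W_def \<beta>i_mul)
    also have "\<dots> = S2 (\<lambda>h x. S2 (\<lambda>k x'. S2 (\<lambda>h' y. S2 (\<lambda>k' y'. T (mulH (inv \<beta> h) (inv \<beta> h')) (mulH k k') (lact x' (d y'))) (\<phi>A y)) (\<phi>A b)) (\<phi>A x)) (\<phi>A a)"
      by (intro S2_cong S2_swap)
    also have "\<dots> = S2 (\<lambda>h x. S2 (\<lambda>u v. S2 (\<lambda>h' y. S2 (\<lambda>k' y'. T (mulH u (inv \<beta> h')) (mulH v k') (lact (inv \<alpha> x) (d y'))) (\<phi>A y)) (\<phi>A b)) (\<Delta> h)) (\<phi>A a)"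
      by (rule PA_coass[where T = "\<lambda>p q r. S2 (\<lambda>h' y. S2 (\<lambda>k' y'. T (mulH p (inv \<beta> h')) (mulH q k') (lact r (d y'))) (\<phi>A y)) (\<phi>A b)"])
         (intro triI linc lmc linc\<phi> lin_T1[OF t] lin_T2[OF t] lin_T3[OF t] bilI)
    also have "\<dots> = ?N"
      by (rule S2_cong, rule S2_cong, rule PA_coass[where T = "\<lambda>p q r. T (mulH _ p) (mulH _ q) (lact (inv \<alpha> _) (d r))"])
         (intro triI linc lmc linc\<phi> lin_T1[OF t] lin_T2[OF t] lin_T3[OF t] bilI)
    finally have L: "S2 (\<lambda>h n. S2 (\<lambda>u v. T (inv \<beta> h) u v) (\<phi> n)) (\<phi> (lact a (d b))) = ?N" .
    have "S2 (\<lambda>h n. S2 (\<lambda>u v. T u v (inv \<gamma> n)) (\<Delta> h)) (\<phi> (lact a (d b)))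
       = S2 (\<lambda>h x. S2 (\<lambda>h' y. S2 (\<lambda>u v. T u v (inv \<gamma> (lact x (d y)))) (\<Delta> (mulH h h'))) (\<phi>A b)) (\<phi>A a)"
      by (subst \<Phi>_gen) (intro linc lmc linc\<phi> lin_tm_comp[OF tm_\<Delta>] lin_T1[OF t] lin_T2[OF t] lin_T3[OF t] bilI, simp add: W_def)
    also have "\<dots> = S2 (\<lambda>h x. S2 (\<lambda>h' y. S2 (\<lambda>u v. S2 (\<lambda>u' v'. T (mulH u u') (mulH v v') (lact (inv \<alpha> x) (d (inv \<alpha> y)))) (\<Delta> h')) (\<Delta> h)) (\<phi>A b)) (\<phi>A a)"
      by (intro S2_cong, subst \<Delta>_mulS) (intro linc lmc lin_T1[OF t] lin_T2[OF t] lin_T3[OF t] bilI, simp add: \<gamma>i_gen)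
    also have "\<dots> = ?N"
      by (intro S2_cong S2_swap)
    finally show "S2 (\<lambda>h n. S2 (\<lambda>u v. T (inv \<beta> h) u v) (\<phi> n)) (\<phi> (lact a (d b))) =
         S2 (\<lambda>h n. S2 (\<lambda>u v. T u v (inv \<gamma> n)) (\<Delta> h)) (\<phi> (lact a (d b)))" using L by simp
  qed
qed

lemma counit\<phi>: "sum_list (map (\<lambda>(h, n). sG (\<epsilon> h) n) (\<phi> m)) = inv \<gamma> m"
proof (rule separation[OF vsG])
  fix g assume gl: "lin sG g"
  have e1: "g (sum_list (map (\<lambda>(h, n). sG (\<epsilon> h) n) xs)) = S2 (\<lambda>h n. \<epsilon> h * g n) xs" for xs
  proof (induct xs)
    case Nil then show ?case by (simp add: lin_zero[OF gl])
  next
    case (Cons p xs) then show ?case by (cases p) (simp add: lin_add[OF gl] lin_scale[OF gl])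
  qed
  have "S2 (\<lambda>h n. \<epsilon> h * g n) (\<phi> m) = g (inv \<gamma> m)"
  proof (rule lin_ext[where f = "\<lambda>m. S2 (\<lambda>h n. \<epsilon> h * g n) (\<phi> m)" and g = "\<lambda>m. g (inv \<gamma> m)"])
    show "lin sG (\<lambda>m. S2 (\<lambda>h n. \<epsilon> h * g n) (\<phi> m))"
      by (intro linc lmc linc\<phi> lin_compose[OF gl] bilI)
    show "lin sG (\<lambda>m. g (inv \<gamma> m))" by (intro lin_compose[OF gl] lmc)
    fix a b
    have "S2 (\<lambda>h n. \<epsilon> h * g n) (\<phi> (lact a (d b))) =
       S2 (\<lambda>h x. S2 (\<lambda>h' y. \<epsilon> h * (\<epsilon> h' * g (lact x (d y)))) (\<phi>A b)) (\<phi>A a)"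
      by (subst \<Phi>_gen) (intro linc lmc linc\<phi> lin_compose[OF gl] bilI, simp add: W_def \<epsilon>_mul mult.assoc)
    also have "\<dots> = S2 (\<lambda>h x. \<epsilon> h * S2 (\<lambda>h' y. \<epsilon> h' * g (lact x (d y))) (\<phi>A b)) (\<phi>A a)"
      by (simp add: S2_cmult)
    also have "\<dots> = S2 (\<lambda>h x. \<epsilon> h * g (lact x (d (inv \<alpha> b)))) (\<phi>A a)"
    proof (rule S2_cong)
      fix h x
      have "g (lact x (d (inv \<alpha> b))) = S2 (\<lambda>h' y. \<epsilon> h' * g (lact x (d y))) (\<phi>A b)"
        unfolding counitA[symmetric] by (rule eps_sum) (intro lin_compose[OF gl] lmc)
      then show "\<epsilon> h * S2 (\<lambda>h' y. \<epsilon> h' * g (lact x (d y))) (\<phi>A b) = \<epsilon> h * g (lact x (d (inv \<alpha> b)))" by simp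
    qed
    also have "\<dots> = g (lact (inv \<alpha> a) (d (inv \<alpha> b)))"
      unfolding counitA[symmetric] by (rule eps_sum[symmetric]) (intro lin_compose[OF gl] lmc)
    finally show "S2 (\<lambda>h n. \<epsilon> h * g n) (\<phi> (lact a (d b))) = g (inv \<gamma> (lact a (d b)))"
      by (simp add: \<gamma>i_gen)
  qed
  then show "g (sum_list (map (\<lambda>(h, n). sG (\<epsilon> h) n) (\<phi> m))) = g (inv \<gamma> m)" by (simp add: e1)
qed

lemma E2_LC: "left_covariant sH \<beta> mulH \<Delta> \<epsilon> \<alpha> \<phi>A sG \<gamma> lact ract d"
  unfolding left_covariant_def hom_comodule_def
  using Gobj tm\<phi> coass\<phi> counit\<phi> cov\<phi> covd\<phi> by blast

end

theorem mainTheorem1: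
  fixes sH :: "'k::field \<Rightarrow> 'h::ab_group_add \<Rightarrow> 'h" and \<beta> :: "'h \<Rightarrow> 'h"
    and mulH :: "'h \<Rightarrow> 'h \<Rightarrow> 'h" and oneH :: 'h
    and \<Delta> :: "'h \<Rightarrow> ('h \<times> 'h) list" and \<epsilon> :: "'h \<Rightarrow> 'k"
    and sA :: "'k \<Rightarrow> 'a::ab_group_add \<Rightarrow> 'a" and \<alpha> :: "'a \<Rightarrow> 'a"
    and mulA :: "'a \<Rightarrow> 'a \<Rightarrow> 'a" and oneA :: 'a
    and \<phi>A :: "'a \<Rightarrow> ('h \<times> 'a) list"
    and sG :: "'k \<Rightarrow> 'g::ab_group_add \<Rightarrow> 'g" and \<gamma> :: "'g \<Rightarrow> 'g"
    and lact :: "'a \<Rightarrow> 'g \<Rightarrow> 'g" and ract :: "'g \<Rightarrow> 'a \<Rightarrow> 'g" and d :: "'a \<Rightarrow> 'g"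
  assumes H: "hom_bialgebra sH \<beta> mulH oneH \<Delta> \<epsilon>"
    and A: "hom_comodule_algebra sH \<beta> mulH oneH \<Delta> \<epsilon> sA \<alpha> mulA oneA \<phi>A"
    and G: "hom_FODC sA \<alpha> mulA oneA sG \<gamma> lact ract d"
  shows "(left_covariant sH \<beta> mulH \<Delta> \<epsilon> \<alpha> \<phi>A sG \<gamma> lact ract d
            \<longleftrightarrow> (\<exists>\<phi>. tmorphism sG \<gamma> sH \<beta> sG \<gamma> \<phi> \<and>
                   (\<forall>a b. teq2 sH sG (\<phi> (lact a (d b))) (tlmult mulH lact (\<phi>A a) (tid_d d (\<phi>A b))))))
       \<and> ((\<exists>\<phi>. tmorphism sG \<gamma> sH \<beta> sG \<gamma> \<phi> \<and>
                   (\<forall>a b. teq2 sH sG (\<phi> (lact a (d b))) (tlmult mulH lact (\<phi>A a) (tid_d d (\<phi>A b)))))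
            \<longleftrightarrow> (\<forall>ps :: ('a \<times> 'a) list.
                   sum_list (map (\<lambda>(a, b). lact a (d b)) ps) = 0 \<longrightarrow>
                   teq2 sH sG
                     (concat (map (\<lambda>(a, b). tlmult mulH lact (\<phi>A a) (tid_d d (\<phi>A b))) ps)) []))"
proof -
  interpret ctx sH \<beta> mulH oneH \<Delta> \<epsilon> sA \<alpha> mulA oneA \<phi>A sG \<gamma> lact ract d
    using H A G by unfold_locales
  have i1: "\<exists>\<phi>. E2 \<phi>" if lc: "left_covariant sH \<beta> mulH \<Delta> \<epsilon> \<alpha> \<phi>A sG \<gamma> lact ract d"
  proof -
    obtain \<phi> where hc: "hom_comodule sH \<beta> \<Delta> \<epsilon> sG \<gamma> \<phi>"
      and cov: "\<forall>a b \<omega>. teq2 sH sG (\<phi> (lact (\<alpha> a) (ract \<omega> b)))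
            (tlmult mulH lact (\<phi>A (\<alpha> a)) (trmult mulH ract (\<phi> \<omega>) (\<phi>A b)))"
      and covd: "\<forall>a. teq2 sH sG (\<phi> (d a)) (tid_d d (\<phi>A a))"
      using lc unfolding left_covariant_def by blast
    show ?thesis using LC_E2[OF hc cov covd] by blast
  qed
  have i2: "left_covariant sH \<beta> mulH \<Delta> \<epsilon> \<alpha> \<phi>A sG \<gamma> lact ract d" if e: "\<exists>\<phi>. E2 \<phi>"
  proof -
    obtain \<phi> where e2: "E2 \<phi>" using e by blast
    have "ctx2 sH \<beta> mulH oneH \<Delta> \<epsilon> sA \<alpha> mulA oneA \<phi>A sG \<gamma> lact ract d \<phi>"
      unfolding ctx2_def ctx2_axioms_def ctx_def using H A G e2 by blast
    then show ?thesis by (rule ctx2.E2_LC)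
  qed
  have i3: E3 if e: "\<exists>\<phi>. E2 \<phi>"
    using e E2_E3 by blast
  have i4: "\<exists>\<phi>. E2 \<phi>" if e: E3
    using E3_E2[OF e] by blast
  show ?thesis using i1 i2 i3 i4 by blast
qed

end
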